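(* Let $\rho$ be an $N\times N$ density matrix with eigenvalues $\lambda_1\ge\dots\ge\lambda_N$ (set $\lambda_j=0$ for $j>N$). Let $\{|i\rangle\}_{i=1}^N$ and $\{|a_i\rangle\}_{i=1}^N$ be two orthonormal bases of $\mathbb{C}^N$, let $U$ be the unitary matrix with entries $U_{ij}=\langle i|a_j\rangle$, and let $p_i=\langle i|\rho|i\rangle$, $q_i=\langle a_i|\rho|a_i\rangle$. Let $m,n$ be integers with $1\le n\le m\le N$. Then $$\sum_{i=1}^m p_i+\sum_{i=1}^n q_i\le\sum_{j=1}^{n}\lambda_j\,(1+s_{n+m-j})+\sum_{j=n+1}^{m}\lambda_j+\sum_{j=m+1}^{m+n}\lambda_j\,(1-s_{j-1}).$$
   Context: For $k=1,\dots,2N-1$, $s_k=\max\{\|M\| : M \text{ a submatrix of } U,\ \#\mathrm{rows}(M)+\#\mathrm{cols}(M)=k+1\}$, where $\|M\|$ denotes the operator norm (largest singular value). *)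

theory Defs
  imports "Jordan_Normal_Form.Schur_Decomposition" "Jordan_Normal_Form.DL_Submatrix"
begin

(* Dirac bracket <x|y> = sum_k conj(x_k) * y_k *)
definition braket :: "complex vec \<Rightarrow> complex vec \<Rightarrow> complex" where
  "braket x y = y \<bullet>c x"

definition vnorm :: "complex vec \<Rightarrow> real" where
  "vnorm v = sqrt (\<Sum>i<dim_vec v. (cmod (v $ i))^2)"

definition op_norm :: "complex mat \<Rightarrow> real" where
  "op_norm M = Sup {vnorm (M *\<^sub>v v) | v. v \<in> carrier_vec (dim_col M) \<and> vnorm v \<le> 1}"

definition s_val :: "nat \<Rightarrow> complex mat \<Rightarrow> nat \<Rightarrow> real" where
  "s_val N U k = Max {op_norm (submatrix U I J) | I J.
      I \<subseteq> {0..<N} \<and> J \<subseteq> {0..<N} \<and> card I + card J = k + 1}"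

definition mtrace :: "complex mat \<Rightarrow> complex" where
  "mtrace A = (\<Sum>i<dim_row A. A $$ (i, i))"

definition hermitian_mat :: "complex mat \<Rightarrow> bool" where
  "hermitian_mat A \<longleftrightarrow> mat_adjoint A = A"

definition density_mat :: "nat \<Rightarrow> complex mat \<Rightarrow> bool" where
  "density_mat N \<rho> \<longleftrightarrow> \<rho> \<in> carrier_mat N N \<and> hermitian_mat \<rho> \<and>
     (\<forall>v \<in> carrier_vec N. Re (braket v (\<rho> *\<^sub>v v)) \<ge> 0) \<and> mtrace \<rho> = 1"

definition orthonormal_basis :: "nat \<Rightarrow> (nat \<Rightarrow> complex vec) \<Rightarrow> bool" where
  "orthonormal_basis N e \<longleftrightarrow> (\<forall>i<N. e i \<in> carrier_vec N) \<and>
     (\<forall>i<N. \<forall>j<N. braket (e i) (e j) = (if i = j then 1 else 0))"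

end

theory Submission
  imports Defs
begin

lemma braket_sum: "x \<in> carrier_vec N \<Longrightarrow> braket x y = (\<Sum>i<N. cnj (x$i) * y$i)"
  unfolding braket_def scalar_prod_def
  by (auto simp: lessThan_atLeast0 mult.commute)

lemma braket_cnj: assumes "x \<in> carrier_vec N" "y \<in> carrier_vec N"
  shows "cnj (braket x y) = braket y x"
  using assms by (simp add: braket_sum mult.commute)

lemma braket_self: assumes "x \<in> carrier_vec N"
  shows "braket x x = of_real (\<Sum>i<N. (cmod (x$i))^2)"
  using assms by (simp add: braket_sum complex_norm_square mult.commute del: of_real_power)

lemma braket_self_re: assumes "x \<in> carrier_vec N"
  shows "Re (braket x x) = (\<Sum>i<N. (cmod (x$i))^2)"
  using braket_self[OF assms] by simp

lemma braket_self_nonneg: assumes "x \<in> carrier_vec N"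
  shows "Re (braket x x) \<ge> 0"
  using braket_self_re[OF assms] by (simp add: sum_nonneg)

lemma braket_self_zero: assumes "x \<in> carrier_vec N" "Re (braket x x) = 0"
  shows "x = 0\<^sub>v N"
proof -
  have "\<forall>i\<in>{..<N}. (cmod (x$i))^2 = 0"
    using assms braket_self_re[OF assms(1)] by (subst sum_nonneg_eq_0_iff[symmetric]) auto
  then show ?thesis using assms(1) by (auto intro!: eq_vecI)
qed

lemma mult_mat_vec_sum: assumes "M \<in> carrier_mat N K" "x \<in> carrier_vec K" "i < N"
  shows "(M *\<^sub>v x) $ i = (\<Sum>j<K. M $$ (i,j) * x $ j)"
proof -
  have "(M *\<^sub>v x) $ i = row M i \<bullet> x" using assms by simp
  also have "\<dots> = (\<Sum>j\<in>{0..<K}. row M i $ j * x $ j)" using assms unfolding scalar_prod_def by simp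
  also have "\<dots> = (\<Sum>j<K. M $$ (i,j) * x $ j)" using assms 
    by (intro sum.cong) auto
  finally show ?thesis .
qed

lemma braket_Mv: assumes "M \<in> carrier_mat N N" "x \<in> carrier_vec N" "y \<in> carrier_vec N"
  shows "braket x (M *\<^sub>v y) = (\<Sum>i<N. \<Sum>j<N. cnj (x$i) * M $$ (i,j) * y $ j)"
proof -
  have "braket x (M *\<^sub>v y) = (\<Sum>i<N. cnj (x$i) * (M *\<^sub>v y) $ i)" using assms by (simp add: braket_sum)
  also have "\<dots> = (\<Sum>i<N. cnj (x$i) * (\<Sum>j<N. M $$ (i,j) * y $ j))"
    using assms mult_mat_vec_sum[OF assms(1,3)] by (intro sum.cong refl) simp
  also have "\<dots> = (\<Sum>i<N. \<Sum>j<N. cnj (x$i) * M $$ (i,j) * y $ j)"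
    by (simp add: sum_distrib_left mult.assoc)
  finally show ?thesis .
qed

lemma braket_herm: assumes "M \<in> carrier_mat N N" "x \<in> carrier_vec N" "y \<in> carrier_vec N"
  and h: "\<forall>i<N. \<forall>j<N. M$$(i,j) = cnj (M$$(j,i))"
  shows "cnj (braket x (M *\<^sub>v y)) = braket y (M *\<^sub>v x)"
proof -
  have "cnj (braket x (M *\<^sub>v y)) = (\<Sum>i<N. \<Sum>j<N. x$i * cnj (M $$ (i,j)) * cnj (y $ j))"
    unfolding braket_Mv[OF assms(1-3)] cnj_sum by simp
  also have "\<dots> = (\<Sum>j<N. \<Sum>i<N. cnj (y $ j) * M $$ (j,i) * x$i)"
  proof (subst sum.swap, intro sum.cong refl)
    fix j i assume "j \<in> {..<N}" "i \<in> {..<N}"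
    then have "cnj (M $$ (i,j)) = M $$ (j,i)" using h by (metis complex_cnj_cnj lessThan_iff)
    then show "x$i * cnj (M $$ (i,j)) * cnj (y $ j) = cnj (y $ j) * M $$ (j,i) * x$i" by simp
  qed
  also have "\<dots> = braket y (M *\<^sub>v x)" unfolding braket_Mv[OF assms(1,3,2)] ..
  finally show ?thesis .
qed

lemma hermitian_entries: assumes "hermitian_mat M" "M \<in> carrier_mat N N"
  shows "\<forall>i<N. \<forall>j<N. M$$(i,j) = cnj (M$$(j,i))"
proof (intro allI impI)
  fix i j assume ij: "i < N" "j < N"
  have "M $$ (i,j) = mat_adjoint M $$ (i,j)" using assms(1) unfolding hermitian_mat_def by simp
  also have "\<dots> = cnj (M $$ (j,i))"
    using assms(2) ij unfolding mat_adjoint_def by (simp add: mat_of_rows_index)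
  finally show "M$$(i,j) = cnj (M$$(j,i))" .
qed

definition onb :: "nat \<Rightarrow> (nat \<Rightarrow> complex vec) \<Rightarrow> bool" where
  "onb N u \<longleftrightarrow> (\<forall>i<N. u i \<in> carrier_vec N) \<and>
     (\<forall>i<N. \<forall>j<N. braket (u i) (u j) = (if i = j then 1 else 0))"

lemma onb_complete: assumes "onb N u" "a < N" "b < N"
  shows "(\<Sum>l<N. u l $ a * cnj (u l $ b)) = (if a = b then 1 else 0)"
proof -
  define W where "W = mat N N (\<lambda>(a,i). u i $ a)"
  define W' where "W' = mat N N (\<lambda>(i,a). cnj (u i $ a))"
  have W: "W \<in> carrier_mat N N" and W': "W' \<in> carrier_mat N N" by (auto simp: W_def W'_def)
  have "W' * W = 1\<^sub>m N"
  proof (rule eq_matI)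
    fix i j assume ij: "i < dim_row (1\<^sub>m N)" "j < dim_col (1\<^sub>m N)"
    have "(W' * W) $$ (i,j) = (\<Sum>k<N. cnj (u i $ k) * u j $ k)"
      using ij by (simp add: W_def W'_def scalar_prod_def lessThan_atLeast0)
    also have "\<dots> = braket (u i) (u j)" using assms(1) ij
      by (subst braket_sum[of _ N]) (auto simp: onb_def)
    also have "\<dots> = 1\<^sub>m N $$ (i,j)" using assms(1) ij by (simp add: onb_def)
    finally show "(W' * W) $$ (i,j) = 1\<^sub>m N $$ (i,j)" .
  qed (auto simp: W_def W'_def)
  hence "W * W' = 1\<^sub>m N" using mat_mult_left_right_inverse[OF W' W] by simp
  hence "(W * W') $$ (a,b) = 1\<^sub>m N $$ (a,b)" by simp
  then show ?thesis using assms
    by (simp add: W_def W'_def scalar_prod_def lessThan_atLeast0)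
qed

lemma onb_expand: assumes "onb N u" "y \<in> carrier_vec N" "a < N"
  shows "y $ a = (\<Sum>l<N. braket (u l) y * u l $ a)"
proof -
  have "(\<Sum>l<N. braket (u l) y * u l $ a) = (\<Sum>l<N. \<Sum>b<N. cnj (u l $ b) * y $ b * u l $ a)"
    using assms by (intro sum.cong refl, subst braket_sum[of _ N]) (auto simp: onb_def sum_distrib_right)
  also have "\<dots> = (\<Sum>b<N. y $ b * (\<Sum>l<N. u l $ a * cnj (u l $ b)))"
    by (subst sum.swap) (simp add: sum_distrib_left mult_ac)
  also have "\<dots> = (\<Sum>b<N. y $ b * (if a = b then 1 else 0))"
    using onb_complete[OF assms(1) assms(3)] by simp
  also have "\<dots> = y $ a" using assms(3) by (simp add: if_distrib cong: if_cong)
  finally show ?thesis by simp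
qed

lemma onb_parseval: assumes "onb N u" "y \<in> carrier_vec N"
  shows "(\<Sum>l<N. (cmod (braket (u l) y))^2) = Re (braket y y)"
proof -
  have "(\<Sum>l<N. of_real ((cmod (braket (u l) y))^2)) = (\<Sum>l<N. cnj (braket (u l) y) * braket (u l) y)"
    by (simp add: complex_norm_square mult.commute del: of_real_power)
  also have "\<dots> = (\<Sum>l<N. \<Sum>a<N. cnj (y $ a) * u l $ a * braket (u l) y)"
  proof (intro sum.cong refl)
    fix l assume l: "l \<in> {..<N}"
    have ul: "u l \<in> carrier_vec N" using assms l by (auto simp: onb_def)
    have "cnj (braket (u l) y) = braket y (u l)" using braket_cnj[OF ul assms(2)] .
    also have "\<dots> = (\<Sum>a<N. cnj (y $ a) * u l $ a)" using braket_sum[OF assms(2)] .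
    finally show "cnj (braket (u l) y) * braket (u l) y = (\<Sum>a<N. cnj (y $ a) * u l $ a * braket (u l) y)"
      by (simp add: sum_distrib_right)
  qed
  also have "\<dots> = (\<Sum>a<N. cnj (y $ a) * (\<Sum>l<N. braket (u l) y * u l $ a))"
    by (subst sum.swap) (simp add: sum_distrib_left mult_ac)
  also have "\<dots> = (\<Sum>a<N. cnj (y $ a) * y $ a)"
    using onb_expand[OF assms] by simp
  also have "\<dots> = braket y y" using assms by (simp add: braket_sum)
  finally have "complex_of_real (\<Sum>l<N. (cmod (braket (u l) y))^2) = braket y y" by simp
  then show ?thesis by (metis Re_complex_of_real)
qed

lemma braket_smult_right: assumes "x \<in> carrier_vec N" "y \<in> carrier_vec N"
  shows "braket x (k \<cdot>\<^sub>v y) = k * braket x y"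
  using assms by (simp add: braket_sum sum_distrib_left mult_ac)

lemma braket_smult_left: assumes "x \<in> carrier_vec N" "y \<in> carrier_vec N"
  shows "braket (k \<cdot>\<^sub>v x) y = cnj k * braket x y"
proof -
  have "braket (k \<cdot>\<^sub>v x) y = (\<Sum>i<N. cnj ((k \<cdot>\<^sub>v x)$i) * y$i)"
    by (rule braket_sum) (use assms in auto)
  also have "\<dots> = cnj k * braket x y" using assms
    by (simp add: braket_sum[OF assms(1)] sum_distrib_left mult_ac)
  finally show ?thesis .
qed

lemma onb_quad: assumes "onb N w" "M \<in> carrier_mat N N" "\<And>j. j < N \<Longrightarrow> M *\<^sub>v w j = c j \<cdot>\<^sub>v w j"
  "x \<in> carrier_vec N"
  shows "braket x (M *\<^sub>v x) = (\<Sum>j<N. c j * of_real ((cmod (braket (w j) x))^2))"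
proof -
  have wc: "\<And>j. j < N \<Longrightarrow> w j \<in> carrier_vec N" using assms(1) by (auto simp: onb_def)
  have Mx: "(M *\<^sub>v x) $ a = (\<Sum>l<N. braket (w l) x * c l * w l $ a)" if a: "a < N" for a
  proof -
    have "(M *\<^sub>v x) $ a = (\<Sum>b<N. M $$ (a,b) * x $ b)" using mult_mat_vec_sum[OF assms(2,4) a] .
    also have "\<dots> = (\<Sum>b<N. M $$ (a,b) * (\<Sum>l<N. braket (w l) x * w l $ b))"
      using onb_expand[OF assms(1,4)] by simp
    also have "\<dots> = (\<Sum>l<N. braket (w l) x * (\<Sum>b<N. M $$ (a,b) * w l $ b))"
      unfolding sum_distrib_left by (subst sum.swap) (simp add: mult_ac)
    also have "\<dots> = (\<Sum>l<N. braket (w l) x * (M *\<^sub>v w l) $ a)"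
      using mult_mat_vec_sum[OF assms(2) wc a] by simp
    also have "\<dots> = (\<Sum>l<N. braket (w l) x * c l * w l $ a)"
    proof (intro sum.cong refl)
      fix l assume l: "l \<in> {..<N}"
      have "dim_vec (w l) = N" using wc l by auto
      then have "(M *\<^sub>v w l) $ a = c l * w l $ a" using assms(3) l a by auto
      then show "braket (w l) x * (M *\<^sub>v w l) $ a = braket (w l) x * c l * w l $ a" by simp
    qed
    finally show ?thesis .
  qed
  have "braket x (M *\<^sub>v x) = (\<Sum>a<N. cnj (x $ a) * (M *\<^sub>v x) $ a)" using assms by (simp add: braket_sum)
  also have "\<dots> = (\<Sum>a<N. \<Sum>l<N. cnj (x $ a) * (braket (w l) x * c l * w l $ a))"
    using Mx by (simp add: sum_distrib_left)
  also have "\<dots> = (\<Sum>l<N. c l * braket (w l) x * (\<Sum>a<N. cnj (x $ a) * w l $ a))"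
    by (subst sum.swap) (simp add: sum_distrib_left mult_ac)
  also have "\<dots> = (\<Sum>l<N. c l * braket (w l) x * cnj (braket (w l) x))"
  proof (intro sum.cong refl)
    fix l assume l: "l \<in> {..<N}"
    have "cnj (braket (w l) x) = braket x (w l)" using braket_cnj wc l assms(4) by auto
    also have "\<dots> = (\<Sum>a<N. cnj (x $ a) * w l $ a)" using braket_sum[OF assms(4)] .
    finally show "c l * braket (w l) x * (\<Sum>a<N. cnj (x $ a) * w l $ a) = c l * braket (w l) x * cnj (braket (w l) x)" by simp
  qed
  also have "\<dots> = (\<Sum>j<N. c j * of_real ((cmod (braket (w j) x))^2))"
    by (simp add: complex_norm_square mult.assoc del: of_real_power)
  finally show ?thesis .
qed

lemma onb_mats: assumes "onb N u"
  defines "W \<equiv> mat N N (\<lambda>(a,i). u i $ a)" and "W' \<equiv> mat N N (\<lambda>(i,a). cnj (u i $ a))"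
  shows "W' * W = 1\<^sub>m N" "W * W' = 1\<^sub>m N"
proof -
  have W: "W \<in> carrier_mat N N" and W': "W' \<in> carrier_mat N N" by (auto simp: W_def W'_def)
  show 1: "W' * W = 1\<^sub>m N"
  proof (rule eq_matI)
    fix i j assume ij: "i < dim_row (1\<^sub>m N)" "j < dim_col (1\<^sub>m N)"
    have "(W' * W) $$ (i,j) = (\<Sum>k<N. cnj (u i $ k) * u j $ k)"
      using ij by (simp add: W_def W'_def scalar_prod_def lessThan_atLeast0)
    also have "\<dots> = braket (u i) (u j)" using assms(1) ij
      by (subst braket_sum[of _ N]) (auto simp: onb_def)
    also have "\<dots> = 1\<^sub>m N $$ (i,j)" using assms(1) ij by (simp add: onb_def)
    finally show "(W' * W) $$ (i,j) = 1\<^sub>m N $$ (i,j)" .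
  qed (auto simp: W_def W'_def)
  show "W * W' = 1\<^sub>m N" using mat_mult_left_right_inverse[OF W' W 1] .
qed

lemma ortho_normalize:
  fixes ws :: "complex vec list"
  assumes "corthogonal ws" "set ws \<subseteq> carrier_vec n" "length ws = n"
  defines "u \<equiv> \<lambda>i. (complex_of_real (1 / sqrt (Re (braket (ws!i) (ws!i))))) \<cdot>\<^sub>v ws!i"
  shows "onb n u"
proof -
  have wc: "ws!i \<in> carrier_vec n" if "i < n" for i using assms that by auto
  have nz: "braket (ws!i) (ws!i) \<noteq> 0" if "i < n" for i
    using corthogonalD[OF assms(1), of i i] assms(3) that by (simp add: braket_def)
  have real: "braket (ws!i) (ws!i) = of_real (Re (braket (ws!i) (ws!i)))" if "i < n" for i
    using braket_self[OF wc[OF that]] by (simp del: of_real_power)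
  have pos: "Re (braket (ws!i) (ws!i)) > 0" if "i < n" for i
  proof -
    have "Re (braket (ws!i) (ws!i)) \<ge> 0" using braket_self_nonneg[OF wc[OF that]] .
    moreover have "Re (braket (ws!i) (ws!i)) \<noteq> 0"
      using real[OF that] nz[OF that] by (metis of_real_0)
    ultimately show ?thesis by linarith
  qed
  show ?thesis unfolding onb_def
  proof (intro conjI allI impI)
    fix i assume "i < n" then show "u i \<in> carrier_vec n" using wc by (auto simp: u_def)
  next
    fix i j assume ij: "i < n" "j < n"
    have "braket (u i) (u j) = complex_of_real (1 / sqrt (Re (braket (ws!i) (ws!i)))) *
        complex_of_real (1 / sqrt (Re (braket (ws!j) (ws!j)))) * braket (ws!i) (ws!j)"
    proof -
      have c: "ws!i \<in> carrier_vec n" "ws!j \<in> carrier_vec n" using wc ij by auto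
      have "braket (u i) (u j) = cnj (complex_of_real (1 / sqrt (Re (braket (ws!i) (ws!i))))) *
         braket (ws!i) (u j)" unfolding u_def by (rule braket_smult_left[OF c(1)]) (use c in \<open>auto simp: u_def\<close>)
      also have "braket (ws!i) (u j) = complex_of_real (1 / sqrt (Re (braket (ws!j) (ws!j)))) * braket (ws!i) (ws!j)"
        unfolding u_def by (rule braket_smult_right[OF c])
      finally show ?thesis by (simp add: mult.assoc)
    qed
    also have "\<dots> = (if i = j then 1 else 0)"
    proof (cases "i = j")
      case True
      then have jj: "j = i" by simp
      define r where "r = Re (braket (ws!i) (ws!i))"
      have r: "r > 0" using pos[OF ij(1)] r_def by simp
      have ss: "sqrt r * sqrt r = r" using r by simp
      have "1 / sqrt r * (1 / sqrt r) * r = r / (sqrt r * sqrt r)" by simp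
      also have "\<dots> = 1" using ss r by simp
      finally have "1 / sqrt r * (1 / sqrt r) * r = 1" .
      then have "complex_of_real (1 / sqrt r) * complex_of_real (1 / sqrt r) * complex_of_real r = 1"
        by (metis of_real_1 of_real_mult)
      moreover have bk: "braket (ws!i) (ws!i) = complex_of_real r" using real[OF ij(1)] r_def by simp
      ultimately have "complex_of_real (1 / sqrt r) * complex_of_real (1 / sqrt r) * braket (ws!i) (ws!i) = 1"
        by (simp only: bk)
      then show ?thesis unfolding jj if_P[OF refl] r_def .
    next
      case False
      then have "braket (ws!i) (ws!j) = 0"
        using corthogonalD[OF assms(1), of j i] assms(3) ij by (simp add: braket_def)
      then show ?thesis using False by simp
    qed
    finally show "braket (u i) (u j) = (if i = j then 1 else 0)" .
  qed
qed

lemma onb_first: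
  fixes v :: "complex vec"
  assumes v: "v \<in> carrier_vec n" "v \<noteq> 0\<^sub>v n"
  shows "\<exists>u k. onb n u \<and> u 0 = k \<cdot>\<^sub>v v"
proof -
  interpret cof_vec_space n "TYPE(complex)" .
  define b where "b = basis_completion v"
  define ws where "ws = gram_schmidt n b"
  from basis_completion[OF v, folded b_def]
  have span_b: "span (set b) = carrier_vec n" and dist_b: "distinct b" 
    and indep: "\<not> lin_dep (set b)" and b: "set b \<subseteq> carrier_vec n" and hdb: "hd b = v" 
    and len_b: "length b = n" by auto
  from hdb len_b v obtain vs where bv: "b = v # vs" by (cases b, auto)
  from gram_schmidt_result[OF b dist_b indep refl, folded ws_def]
  have ws: "set ws \<subseteq> carrier_vec n" "corthogonal ws" "length ws = n" 
    by (auto simp: len_b)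
  from gram_schmidt_hd[OF v(1), of vs, folded bv] have hdws: "hd ws = v" unfolding ws_def .
  have "n \<noteq> 0" using v by auto
  then have ws0: "ws ! 0 = v" using hdws ws(3) by (cases ws) auto
  define u where "u \<equiv> \<lambda>i. (complex_of_real (1 / sqrt (Re (braket (ws!i) (ws!i))))) \<cdot>\<^sub>v ws!i"
  have "onb n u" using ortho_normalize[OF ws(2,1,3)] unfolding u_def .
  moreover have "u 0 = (complex_of_real (1 / sqrt (Re (braket v v)))) \<cdot>\<^sub>v v" unfolding u_def ws0 ..
  ultimately show ?thesis by blast
qed

lemma spectral:
  fixes M :: "complex mat"
  assumes "M \<in> carrier_mat n n" "\<forall>i<n. \<forall>j<n. M$$(i,j) = cnj (M$$(j,i))"
    "char_poly M = (\<Prod>c\<leftarrow>es. [:-c,1:])"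
  shows "\<exists>w. onb n w \<and> (\<forall>i<n. M *\<^sub>v w i = es!i \<cdot>\<^sub>v w i)"
  using assms
proof (induction es arbitrary: n M)
  case Nil
  then have "n = 0" using degree_monic_char_poly[OF Nil(1)] by simp
  then show ?case by (auto simp: onb_def)
next
  case (Cons c es n M)
  note M = Cons.prems(1) and herm = Cons.prems(2) and cp = Cons.prems(3)
  have deg: "n = Suc (length es)"
    using degree_monic_char_poly[OF M] cp degree_linear_factors[of "\<lambda>c. -c" "c#es"] by simp
  define n1 where "n1 = length es"
  have n: "n = Suc n1" using deg n1_def by simp
  have "eigenvalue M c" unfolding eigenvalue_root_char_poly[OF M] cp by simp
  from find_eigenvector[OF M this] have v: "v \<in> carrier_vec n" "v \<noteq> 0\<^sub>v n" "M *\<^sub>v v = c \<cdot>\<^sub>v v"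
    if "v = find_eigenvector M c" for v
    unfolding eigenvector_def using M that by auto
  from onb_first[OF v(1,2)] obtain u k where u: "onb n u" and u0: "u 0 = k \<cdot>\<^sub>v find_eigenvector M c"
    by blast
  have uc: "\<And>i. i < n \<Longrightarrow> u i \<in> carrier_vec n" using u by (auto simp: onb_def)
  have Mu0: "M *\<^sub>v u 0 = c \<cdot>\<^sub>v u 0"
    unfolding u0 mult_mat_vec[OF M v(1)[OF refl]] v(3)[OF refl] by (simp add: smult_smult_assoc mult.commute)
  define M1 where "M1 = (\<lambda>i j. braket (u i) (M *\<^sub>v u j))"
  have M1_0: "M1 i 0 = (if i = 0 then c else 0)" if "i < n" for i
  proof -
    have "M1 i 0 = braket (u i) (c \<cdot>\<^sub>v u 0)" unfolding M1_def Mu0 ..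
    also have "\<dots> = c * braket (u i) (u 0)" using uc that n by (intro braket_smult_right) auto
    finally show ?thesis using u that n by (auto simp: onb_def)
  qed
  have M1_herm: "M1 i j = cnj (M1 j i)" if "i < n" "j < n" for i j
    unfolding M1_def using braket_herm[OF M uc[OF that(2)] uc[OF that(1)] herm] by simp
  define M' where "M' = mat n1 n1 (\<lambda>(i,j). M1 (Suc i) (Suc j))"
  have M'c: "M' \<in> carrier_mat n1 n1" unfolding M'_def by simp
  have herm': "\<forall>i<n1. \<forall>j<n1. M'$$(i,j) = cnj (M'$$(j,i))"
  proof (intro allI impI)
    fix i j assume "i < n1" "j < n1"
    then show "M'$$(i,j) = cnj (M'$$(j,i))" unfolding M'_def using M1_herm[of "Suc i" "Suc j"] n by simp
  qed
  have cp': "char_poly M' = (\<Prod>c\<leftarrow>es. [:-c,1:])"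
  proof -
    define W where "W \<equiv> mat n n (\<lambda>(a,i). u i $ a)"
    define W' where "W' \<equiv> mat n n (\<lambda>(i,a). cnj (u i $ a))"
    have WW: "W' * W = 1\<^sub>m n" "W * W' = 1\<^sub>m n" using onb_mats[OF u] unfolding W_def W'_def by auto
    have Wc: "W \<in> carrier_mat n n" "W' \<in> carrier_mat n n" unfolding W_def W'_def by auto
    define M1m where "M1m = mat n n (\<lambda>(i,j). M1 i j)"
    have MW: "M * W = mat n n (\<lambda>(a,j). (M *\<^sub>v u j) $ a)"
    proof (rule eq_matI)
      fix a j assume aj: "a < dim_row (mat n n (\<lambda>(a,j). (M *\<^sub>v u j) $ a))" "j < dim_col (mat n n (\<lambda>(a,j). (M *\<^sub>v u j) $ a))"
      then have "col W j = u j" using uc[of j] unfolding W_def by (auto intro!: eq_vecI)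
      then show "(M * W) $$ (a,j) = mat n n (\<lambda>(a,j). (M *\<^sub>v u j) $ a) $$ (a,j)"
        using aj M Wc by simp
    qed (use M Wc in auto)
    have M1m: "M1m = W' * (M * W)"
    proof (rule eq_matI)
      fix i j assume ij: "i < dim_row (W' * (M * W))" "j < dim_col (W' * (M * W))"
      then have ij': "i < n" "j < n" using Wc M by auto
      have "(W' * (M * W)) $$ (i,j) = (\<Sum>a<n. cnj (u i $ a) * (M *\<^sub>v u j) $ a)"
        using ij' unfolding MW by (simp add: W'_def scalar_prod_def lessThan_atLeast0)
      also have "\<dots> = M1 i j" unfolding M1_def by (rule braket_sum[OF uc[OF ij'(1)], symmetric])
      finally show "M1m $$ (i,j) = (W' * (M * W)) $$ (i,j)" using ij' by (simp add: M1m_def)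
    qed (use M Wc in \<open>auto simp: M1m_def\<close>)
    have M1c: "M1m \<in> carrier_mat n n" unfolding M1m_def by simp
    have "W * M1m * W' = W * (W' * (M * W)) * W'" unfolding M1m ..
    also have "\<dots> = (W * W') * (M * W) * W'" using Wc M by (simp add: assoc_mult_mat[of _ n n _ n _ n])
    also have "\<dots> = M * (W * W')" using Wc M WW by simp
    also have "\<dots> = M" using WW M by simp
    finally have "M = W * M1m * W'" ..
    then have "similar_mat_wit M M1m W W'" unfolding similar_mat_wit_def using M M1c Wc WW by (auto simp: Let_def)
    then have "char_poly M = char_poly M1m" using char_poly_similar unfolding similar_mat_def by blast
    also have "M1m = four_block_mat (mat 1 1 (\<lambda>_. c)) (mat 1 n1 (\<lambda>(_,j). M1 0 (Suc j))) (0\<^sub>m n1 1) M'"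
    proof (rule eq_matI)
      fix i j assume ij: "i < dim_row (four_block_mat (mat 1 1 (\<lambda>_. c)) (mat 1 n1 (\<lambda>(_,j). M1 0 (Suc j))) (0\<^sub>m n1 1) M')"
         "j < dim_col (four_block_mat (mat 1 1 (\<lambda>_. c)) (mat 1 n1 (\<lambda>(_,j). M1 0 (Suc j))) (0\<^sub>m n1 1) M')"
      then have ij': "i < n" "j < n" using M'c n by auto
      show "M1m $$ (i,j) = four_block_mat (mat 1 1 (\<lambda>_. c)) (mat 1 n1 (\<lambda>(_,j). M1 0 (Suc j))) (0\<^sub>m n1 1) M' $$ (i,j)"
        using ij ij' M1_0[of i] M'c n by (cases i; cases j) (auto simp: M1m_def M'_def)
    qed (use M'c n in \<open>auto simp: M1m_def\<close>)
    also have "char_poly \<dots> = char_poly (mat 1 1 (\<lambda>_. c)) * char_poly M'"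
      by (rule char_poly_four_block_zeros_col) (use M'c in auto)
    also have "char_poly (mat 1 1 (\<lambda>_. c)) = [:-c, 1:]"
      by (simp add: char_poly_defs det_def sign_def)
    finally have "[:-c,1:] * char_poly M' = [:-c,1:] * (\<Prod>c\<leftarrow>es. [:-c,1:])" using cp by simp
    then show ?thesis by (metis mult_cancel_left pCons_eq_0_iff zero_neq_one)
  qed
  from Cons.IH[OF M'c herm' cp'] obtain w' where w': "onb n1 w'" "\<forall>i<n1. M' *\<^sub>v w' i = es!i \<cdot>\<^sub>v w' i"
    by blast
  define emb where "emb y = vec n (\<lambda>a. \<Sum>k<n1. y$k * u (Suc k) $ a)" for y
  have emb_c: "emb y \<in> carrier_vec n" for y unfolding emb_def by simp
  have ucS: "u (Suc k) \<in> carrier_vec n" if "k < n1" for k using uc that n by simp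
  have emb_br: "braket (emb y) (emb z) = braket y z" if "y \<in> carrier_vec n1" "z \<in> carrier_vec n1" for y z
  proof -
    have "braket (emb y) (emb z) = (\<Sum>a<n. cnj (emb y $ a) * emb z $ a)" by (rule braket_sum[OF emb_c])
    also have "\<dots> = (\<Sum>a<n. \<Sum>k<n1. \<Sum>l<n1. cnj (y$k) * z$l * (cnj (u (Suc k) $ a) * u (Suc l) $ a))"
      by (intro sum.cong refl) (simp add: emb_def cnj_sum sum_product, intro sum.cong refl, simp add: mult_ac)
    also have "\<dots> = (\<Sum>k<n1. \<Sum>a<n. \<Sum>l<n1. cnj (y$k) * z$l * (cnj (u (Suc k) $ a) * u (Suc l) $ a))"
      by (rule sum.swap)
    also have "\<dots> = (\<Sum>k<n1. \<Sum>l<n1. \<Sum>a<n. cnj (y$k) * z$l * (cnj (u (Suc k) $ a) * u (Suc l) $ a))"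
      by (rule sum.cong[OF refl], rule sum.swap)
    also have "\<dots> = (\<Sum>k<n1. \<Sum>l<n1. cnj (y$k) * z$l * braket (u (Suc k)) (u (Suc l)))"
      by (intro sum.cong refl) (simp add: braket_sum[OF ucS] sum_distrib_left)
    also have "\<dots> = (\<Sum>k<n1. \<Sum>l<n1. cnj (y$k) * z$l * (if k = l then 1 else 0))"
      using u n by (intro sum.cong refl) (simp add: onb_def)
    also have "\<dots> = (\<Sum>k<n1. cnj (y$k) * z$k)"
      by (intro sum.cong refl) (simp add: if_distrib cong: if_cong)
    also have "\<dots> = braket y z" using braket_sum[OF that(1)] by simp
    finally show ?thesis .
  qed
  have emb_br0: "braket (u 0) (emb z) = 0" if "z \<in> carrier_vec n1" for z
  proof -
    have u0c: "u 0 \<in> carrier_vec n" using uc n by simp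
    have "braket (u 0) (emb z) = (\<Sum>a<n. cnj (u 0 $ a) * emb z $ a)" by (rule braket_sum[OF u0c])
    also have "\<dots> = (\<Sum>a<n. \<Sum>l<n1. z$l * (cnj (u 0 $ a) * u (Suc l) $ a))"
      by (intro sum.cong refl) (simp add: emb_def sum_distrib_left mult_ac)
    also have "\<dots> = (\<Sum>l<n1. \<Sum>a<n. z$l * (cnj (u 0 $ a) * u (Suc l) $ a))"
      by (rule sum.swap)
    also have "\<dots> = (\<Sum>l<n1. z$l * braket (u 0) (u (Suc l)))"
      by (intro sum.cong refl) (simp add: braket_sum[OF u0c] sum_distrib_left)
    also have "\<dots> = 0"
      using u n by (intro sum.neutral) (simp add: onb_def)
    finally show ?thesis .
  qed
  have Muk: "(M *\<^sub>v u (Suc k)) $ a = (\<Sum>l<n1. M' $$ (l,k) * u (Suc l) $ a)" if k: "k < n1" and a: "a < n" for k a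
  proof -
    have Mc: "M *\<^sub>v u (Suc k) \<in> carrier_vec n" using M ucS[OF k] by simp
    have "(M *\<^sub>v u (Suc k)) $ a = (\<Sum>l<n. M1 l (Suc k) * u l $ a)"
      using onb_expand[OF u Mc a] unfolding M1_def .
    also have "\<dots> = M1 0 (Suc k) * u 0 $ a + (\<Sum>l<n1. M1 (Suc l) (Suc k) * u (Suc l) $ a)"
      unfolding n by (rule sum.lessThan_Suc_shift)
    also have "M1 0 (Suc k) = 0" using M1_herm[of 0 "Suc k"] M1_0[of "Suc k"] k n by simp
    also have "(\<Sum>l<n1. M1 (Suc l) (Suc k) * u (Suc l) $ a) = (\<Sum>l<n1. M' $$ (l,k) * u (Suc l) $ a)"
      using k by (intro sum.cong refl) (simp add: M'_def)
    finally show ?thesis by simp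
  qed
  have emb_M: "M *\<^sub>v emb y = emb (M' *\<^sub>v y)" if y: "y \<in> carrier_vec n1" for y
  proof (rule eq_vecI)
    show "dim_vec (M *\<^sub>v emb y) = dim_vec (emb (M' *\<^sub>v y))" using M by (simp add: emb_def)
    fix a assume "a < dim_vec (emb (M' *\<^sub>v y))"
    then have a: "a < n" by (simp add: emb_def)
    have "(M *\<^sub>v emb y) $ a = (\<Sum>b<n. M $$ (a,b) * emb y $ b)" using mult_mat_vec_sum[OF M emb_c a] .
    also have "\<dots> = (\<Sum>b<n. \<Sum>k<n1. y$k * (M $$ (a,b) * u (Suc k) $ b))"
      by (intro sum.cong refl) (simp add: emb_def sum_distrib_left mult_ac)
    also have "\<dots> = (\<Sum>k<n1. \<Sum>b<n. y$k * (M $$ (a,b) * u (Suc k) $ b))" by (rule sum.swap)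
    also have "\<dots> = (\<Sum>k<n1. y$k * (M *\<^sub>v u (Suc k)) $ a)"
      by (intro sum.cong refl) (simp add: mult_mat_vec_sum[OF M ucS a] sum_distrib_left)
    also have "\<dots> = (\<Sum>k<n1. \<Sum>l<n1. y$k * (M' $$ (l,k) * u (Suc l) $ a))"
      by (intro sum.cong refl) (simp add: Muk a sum_distrib_left)
    also have "\<dots> = (\<Sum>l<n1. \<Sum>k<n1. y$k * (M' $$ (l,k) * u (Suc l) $ a))" by (rule sum.swap)
    also have "\<dots> = (\<Sum>l<n1. (M' *\<^sub>v y) $ l * u (Suc l) $ a)"
      by (intro sum.cong refl) (simp add: mult_mat_vec_sum[OF M'c y] sum_distrib_right, intro sum.cong refl, simp add: mult_ac)
    also have "\<dots> = emb (M' *\<^sub>v y) $ a" using a by (simp add: emb_def)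
    finally show "(M *\<^sub>v emb y) $ a = emb (M' *\<^sub>v y) $ a" .
  qed
  have emb_smult: "emb (a \<cdot>\<^sub>v y) = a \<cdot>\<^sub>v emb y" if "y \<in> carrier_vec n1" for y a
    unfolding emb_def using that by (auto simp: sum_distrib_left mult_ac intro!: eq_vecI)
  define w where "w i = (if i = 0 then u 0 else emb (w' (i - 1)))" for i
  have w'c: "w' i \<in> carrier_vec n1" if "i < n1" for i using w'(1) that by (auto simp: onb_def)
  have "onb n w" unfolding onb_def
  proof (intro conjI allI impI)
    fix i assume "i < n" then show "w i \<in> carrier_vec n" using uc emb_c by (auto simp: w_def)
  next
    fix i j assume ij: "i < n" "j < n"
    show "braket (w i) (w j) = (if i = j then 1 else 0)"
    proof (cases "i = 0")
      case True
      then show ?thesis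
      proof (cases "j = 0")
        case True
        then show ?thesis using \<open>i = 0\<close> u n by (auto simp: w_def onb_def)
      next
        case False
        then show ?thesis using \<open>i = 0\<close> emb_br0 w'c ij n by (auto simp: w_def)
      qed
    next
      case False
      then show ?thesis
      proof (cases "j = 0")
        case True
        have "braket (w i) (w j) = cnj (braket (w j) (w i))"
          using braket_cnj[of "w j" n "w i"] uc emb_c ij by (auto simp: w_def)
        also have "braket (w j) (w i) = 0" using True False emb_br0 w'c ij n by (auto simp: w_def)
        finally show ?thesis using True False by simp
      next
        case False
        then have "braket (w i) (w j) = braket (w' (i-1)) (w' (j-1))"
          using \<open>i \<noteq> 0\<close> emb_br w'c ij n by (auto simp: w_def)
        also have "\<dots> = (if i = j then 1 else 0)" using w'(1) \<open>i \<noteq> 0\<close> False ij n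
          by (auto simp: onb_def)
        finally show ?thesis .
      qed
    qed
  qed
  moreover have "\<forall>i<n. M *\<^sub>v w i = (c#es)!i \<cdot>\<^sub>v w i"
  proof (intro allI impI)
    fix i assume i: "i < n"
    show "M *\<^sub>v w i = (c#es)!i \<cdot>\<^sub>v w i"
    proof (cases i)
      case 0 then show ?thesis using Mu0 by (simp add: w_def)
    next
      case (Suc i')
      then have i': "i' < n1" using i n by simp
      have "M *\<^sub>v w i = emb (M' *\<^sub>v w' i')" using Suc emb_M w'c[OF i'] by (simp add: w_def)
      also have "\<dots> = es!i' \<cdot>\<^sub>v w i" using w'(2) i' Suc emb_smult w'c[OF i'] by (simp add: w_def)
      finally show ?thesis using Suc by simp
    qed
  qed
  ultimately show ?case by blast
qed

lemma herm_eigen_real: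
  fixes M :: "complex mat"
  assumes M: "M \<in> carrier_mat n n" and herm: "\<forall>i<n. \<forall>j<n. M$$(i,j) = cnj (M$$(j,i))"
    and v: "v \<in> carrier_vec n" "v \<noteq> 0\<^sub>v n" "M *\<^sub>v v = c \<cdot>\<^sub>v v"
  shows "c = of_real (Re c)"
proof -
  have bvv: "braket v (M *\<^sub>v v) = c * braket v v" unfolding v(3) by (rule braket_smult_right[OF v(1) v(1)])
  have "cnj (braket v (M *\<^sub>v v)) = braket v (M *\<^sub>v v)" by (rule braket_herm[OF M v(1) v(1) herm])
  then have "cnj c * cnj (braket v v) = c * braket v v" unfolding bvv by simp
  moreover have "cnj (braket v v) = braket v v" using braket_cnj[OF v(1) v(1)] .
  moreover have "braket v v \<noteq> 0"
  proof
    assume "braket v v = 0"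
    then have "Re (braket v v) = 0" by simp
    then show False using braket_self_zero[OF v(1)] v(2) by simp
  qed
  ultimately have "cnj c = c" by simp
  then have "Im (cnj c) = Im c" by simp
  then have "Im c = 0" by simp
  then show ?thesis by (simp add: complex_eq_iff)
qed

lemma spectral_sorted:
  fixes M :: "complex mat"
  assumes M: "M \<in> carrier_mat n n" and herm: "\<forall>i<n. \<forall>j<n. M$$(i,j) = cnj (M$$(j,i))"
  shows "\<exists>w \<mu>. onb n w \<and> (\<forall>i<n. M *\<^sub>v w i = complex_of_real (\<mu> i) \<cdot>\<^sub>v w i) \<and>
     (\<forall>i j. i \<le> j \<longrightarrow> j < n \<longrightarrow> \<mu> j \<le> \<mu> i)"
proof -
  obtain es where es: "char_poly M = (\<Prod>a\<leftarrow>es. [:- a, 1:])" "length es = n"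
    using char_poly_factorized[OF M] by blast
  have real: "c = of_real (Re c)" if "c \<in> set es" for c
  proof -
    have "eigenvalue M c" unfolding eigenvalue_root_char_poly[OF M] es(1) using that
      by (auto simp: poly_prod_list prod_list_zero_iff)
    from find_eigenvector[OF M this] have "eigenvector M (find_eigenvector M c) c" .
    then show ?thesis using herm_eigen_real[OF M herm] M unfolding eigenvector_def by auto
  qed
  define rs where "rs = rev (sort (map Re es))"
  define es' where "es' = map complex_of_real rs"
  have "mset es' = image_mset complex_of_real (mset (map Re es))" unfolding es'_def rs_def by simp
  also have "\<dots> = mset (map (\<lambda>c. complex_of_real (Re c)) es)" by (simp add: image_mset.compositionality comp_def)
  also have "map (\<lambda>c. complex_of_real (Re c)) es = es" using real by (intro map_idI) auto
  finally have mes: "mset es' = mset es" .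
  have "(\<Prod>a\<leftarrow>es'. [:- a, 1:]) = prod_mset (image_mset (\<lambda>a. [:- a, 1:]) (mset es'))"
    by (metis mset_map prod_mset_prod_list)
  also have "\<dots> = (\<Prod>a\<leftarrow>es. [:- a, 1:])" unfolding mes by (metis mset_map prod_mset_prod_list)
  finally have cp: "char_poly M = (\<Prod>a\<leftarrow>es'. [:- a, 1:])" using es by simp
  from spectral[OF M herm cp] obtain w where w: "onb n w" "\<forall>i<n. M *\<^sub>v w i = es'!i \<cdot>\<^sub>v w i" by blast
  have len: "length rs = n" using es(2) by (simp add: rs_def)
  have "\<forall>i<n. M *\<^sub>v w i = complex_of_real (rs!i) \<cdot>\<^sub>v w i" using w(2) len by (simp add: es'_def)
  moreover have "\<forall>i j. i \<le> j \<longrightarrow> j < n \<longrightarrow> rs!j \<le> rs!i"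
  proof (intro allI impI)
    fix i j assume "i \<le> j" "j < n"
    moreover have "sorted (rev rs)" by (simp add: rs_def)
    ultimately show "rs!j \<le> rs!i" using sorted_rev_nth_mono len by blast
  qed
  ultimately show ?thesis using w(1) by blast
qed

lemma sum_lessThan_add:
  fixes h :: "nat \<Rightarrow> 'a::comm_monoid_add" and a b :: nat
  shows "(\<Sum>k<a+b. h k) = (\<Sum>k<a. h k) + (\<Sum>k<b. h (a+k))"
  by (induction b) (auto simp: add.assoc)

lemma cs_real:
  fixes x y :: "nat \<Rightarrow> real"
  shows "(\<Sum>i\<in>S. x i * y i)^2 \<le> (\<Sum>i\<in>S. (x i)^2) * (\<Sum>i\<in>S. (y i)^2)"
proof (cases "finite S")
  case True
  have "0 \<le> (\<Sum>i\<in>S. \<Sum>j\<in>S. (x i * y j - x j * y i)^2)" by (intro sum_nonneg) auto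
  also have "\<dots> = (\<Sum>i\<in>S. \<Sum>j\<in>S. (x i)^2 * (y j)^2 + (x j)^2 * (y i)^2 - 2 * ((x i * y i) * (x j * y j)))"
    by (intro sum.cong refl) (simp add: power2_eq_square algebra_simps)
  also have "\<dots> = 2 * ((\<Sum>i\<in>S. (x i)^2) * (\<Sum>i\<in>S. (y i)^2)) - 2 * (\<Sum>i\<in>S. x i * y i)^2"
  proof -
    have a: "(\<Sum>i\<in>S. \<Sum>j\<in>S. (x i)^2 * (y j)^2) = (\<Sum>i\<in>S. (x i)^2) * (\<Sum>i\<in>S. (y i)^2)"
      by (simp add: sum_product)
    have b: "(\<Sum>i\<in>S. \<Sum>j\<in>S. (x j)^2 * (y i)^2) = (\<Sum>i\<in>S. (x i)^2) * (\<Sum>i\<in>S. (y i)^2)"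
      by (subst sum.swap) (simp add: sum_product)
    have c: "(\<Sum>i\<in>S. \<Sum>j\<in>S. (x i * y i) * (x j * y j)) = (\<Sum>i\<in>S. x i * y i)^2"
      by (simp add: sum_product power2_eq_square)
    have "(\<Sum>i\<in>S. \<Sum>j\<in>S. (x i)^2 * (y j)^2 + (x j)^2 * (y i)^2 - 2 * ((x i * y i) * (x j * y j)))
      = (\<Sum>i\<in>S. \<Sum>j\<in>S. (x i)^2 * (y j)^2) + (\<Sum>i\<in>S. \<Sum>j\<in>S. (x j)^2 * (y i)^2)
        - 2 * (\<Sum>i\<in>S. \<Sum>j\<in>S. (x i * y i) * (x j * y j))"
      by (simp only: sum.distrib sum_subtractf sum_distrib_left)
    then show ?thesis unfolding a b c by simp
  qed
  finally show ?thesis by simp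
qed simp

lemma cs_real_sqrt:
  fixes x y :: "nat \<Rightarrow> real"
  shows "(\<Sum>i\<in>S. x i * y i) \<le> sqrt (\<Sum>i\<in>S. (x i)^2) * sqrt (\<Sum>i\<in>S. (y i)^2)"
proof -
  have "(\<Sum>i\<in>S. x i * y i) \<le> \<bar>\<Sum>i\<in>S. x i * y i\<bar>" by simp
  also have "\<dots> = sqrt ((\<Sum>i\<in>S. x i * y i)^2)" by simp
  also have "\<dots> \<le> sqrt ((\<Sum>i\<in>S. (x i)^2) * (\<Sum>i\<in>S. (y i)^2))" using cs_real by (rule real_sqrt_le_mono)
  also have "\<dots> = sqrt (\<Sum>i\<in>S. (x i)^2) * sqrt (\<Sum>i\<in>S. (y i)^2)" by (rule real_sqrt_mult)
  finally show ?thesis .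
qed

lemma cs_complex:
  fixes x y :: "nat \<Rightarrow> complex"
  shows "cmod (\<Sum>i\<in>S. cnj (x i) * y i) \<le> sqrt (\<Sum>i\<in>S. (cmod (x i))^2) * sqrt (\<Sum>i\<in>S. (cmod (y i))^2)"
proof -
  have "cmod (\<Sum>i\<in>S. cnj (x i) * y i) \<le> (\<Sum>i\<in>S. cmod (cnj (x i) * y i))" by (rule norm_sum)
  also have "\<dots> = (\<Sum>i\<in>S. cmod (x i) * cmod (y i))" by (simp add: norm_mult)
  also have "\<dots> \<le> sqrt (\<Sum>i\<in>S. (cmod (x i))^2) * sqrt (\<Sum>i\<in>S. (cmod (y i))^2)" by (rule cs_real_sqrt)
  finally show ?thesis .
qed

definition nsq :: "complex vec \<Rightarrow> real" where "nsq x = Re (braket x x)"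

lemma nsq_sum: "x \<in> carrier_vec N \<Longrightarrow> nsq x = (\<Sum>i<N. (cmod (x$i))^2)"
  unfolding nsq_def by (rule braket_self_re)

lemma nsq_nonneg: "x \<in> carrier_vec N \<Longrightarrow> nsq x \<ge> 0"
  by (simp add: nsq_sum sum_nonneg)

lemma braket_self_nsq: "x \<in> carrier_vec N \<Longrightarrow> braket x x = of_real (nsq x)"
  by (simp add: nsq_sum braket_self del: of_real_power)

lemma cs_vec: assumes "x \<in> carrier_vec N" "y \<in> carrier_vec N"
  shows "cmod (braket x y) \<le> sqrt (nsq x) * sqrt (nsq y)"
  using cs_complex[of "\<lambda>i. x$i" "\<lambda>i. y$i" "{..<N}"] assms by (simp add: braket_sum nsq_sum)

lemma braket_add_right: assumes "x \<in> carrier_vec N" "y \<in> carrier_vec N" "z \<in> carrier_vec N"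
  shows "braket x (y + z) = braket x y + braket x z"
  using assms by (simp add: braket_sum sum.distrib algebra_simps)

lemma braket_add_left: assumes "x \<in> carrier_vec N" "y \<in> carrier_vec N" "z \<in> carrier_vec N"
  shows "braket (y + z) x = braket y x + braket z x"
proof -
  have "braket (y + z) x = (\<Sum>i<N. cnj ((y+z)$i) * x$i)" by (rule braket_sum) (use assms in auto)
  also have "\<dots> = braket y x + braket z x" using assms
    by (simp add: braket_sum[of y N] braket_sum[of z N] sum.distrib algebra_simps)
  finally show ?thesis .
qed

definition lc :: "nat \<Rightarrow> nat set \<Rightarrow> (nat \<Rightarrow> complex) \<Rightarrow> (nat \<Rightarrow> complex vec) \<Rightarrow> complex vec" where
  "lc N S c g = vec N (\<lambda>a. \<Sum>k\<in>S. c k * g k $ a)"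

lemma lc_carrier[simp]: "lc N S c g \<in> carrier_vec N" by (simp add: lc_def)

lemma braket_lc_right: assumes "y \<in> carrier_vec N" "\<And>k. k \<in> S \<Longrightarrow> g k \<in> carrier_vec N" "finite S"
  shows "braket y (lc N S c g) = (\<Sum>k\<in>S. c k * braket y (g k))"
proof -
  have "braket y (lc N S c g) = (\<Sum>a<N. \<Sum>k\<in>S. c k * (cnj (y$a) * g k $ a))"
    using assms by (simp add: braket_sum lc_def sum_distrib_left mult_ac)
  also have "\<dots> = (\<Sum>k\<in>S. \<Sum>a<N. c k * (cnj (y$a) * g k $ a))" by (rule sum.swap)
  also have "\<dots> = (\<Sum>k\<in>S. c k * braket y (g k))"
    using assms by (intro sum.cong refl) (simp add: braket_sum sum_distrib_left)
  finally show ?thesis .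
qed

lemma braket_lc_left: assumes "y \<in> carrier_vec N" "\<And>k. k \<in> S \<Longrightarrow> g k \<in> carrier_vec N" "finite S"
  shows "braket (lc N S c g) y = (\<Sum>k\<in>S. cnj (c k) * braket (g k) y)"
proof -
  have "braket (lc N S c g) y = cnj (braket y (lc N S c g))" using braket_cnj[OF assms(1) lc_carrier] by simp
  also have "\<dots> = (\<Sum>k\<in>S. cnj (c k) * cnj (braket y (g k)))" using braket_lc_right[OF assms] by (simp add: cnj_sum)
  also have "\<dots> = (\<Sum>k\<in>S. cnj (c k) * braket (g k) y)"
    using assms by (intro sum.cong refl) (simp add: braket_cnj)
  finally show ?thesis .
qed

lemma braket_lc_lc: assumes "\<And>k. k \<in> S \<Longrightarrow> g k \<in> carrier_vec N" "finite S"
  "\<And>k l. k \<in> S \<Longrightarrow> l \<in> S \<Longrightarrow> braket (g k) (g l) = (if k = l then 1 else 0)"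
  shows "braket (lc N S c g) (lc N S d g) = (\<Sum>k\<in>S. cnj (c k) * d k)"
proof -
  have "braket (lc N S c g) (lc N S d g) = (\<Sum>k\<in>S. cnj (c k) * braket (g k) (lc N S d g))"
    using assms by (intro braket_lc_left) auto
  also have "\<dots> = (\<Sum>k\<in>S. cnj (c k) * (\<Sum>l\<in>S. d l * (if k = l then 1 else 0)))"
    using assms by (intro sum.cong refl) (simp add: braket_lc_right)
  also have "\<dots> = (\<Sum>k\<in>S. cnj (c k) * d k)"
    using assms(2) by (intro sum.cong refl) (simp add: if_distrib cong: if_cong)
  finally show ?thesis .
qed

lemma nsq_lc: assumes "\<And>k. k \<in> S \<Longrightarrow> g k \<in> carrier_vec N" "finite S"
  "\<And>k l. k \<in> S \<Longrightarrow> l \<in> S \<Longrightarrow> braket (g k) (g l) = (if k = l then 1 else 0)"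
  shows "nsq (lc N S c g) = (\<Sum>k\<in>S. (cmod (c k))^2)"
proof -
  have "nsq (lc N S c g) = Re (\<Sum>k\<in>S. cnj (c k) * c k)" unfolding nsq_def using braket_lc_lc[OF assms] by simp
  also have "\<dots> = Re (\<Sum>k\<in>S. of_real ((cmod (c k))^2))"
    by (intro arg_cong[where f=Re] sum.cong refl) (simp add: complex_norm_square mult.commute del: of_real_power)
  also have "\<dots> = (\<Sum>k\<in>S. (cmod (c k))^2)" by (simp only: Re_sum Re_complex_of_real)
  finally show ?thesis .
qed

lemma vnorm_sum: "v \<in> carrier_vec n \<Longrightarrow> vnorm v = sqrt (\<Sum>i<n. (cmod (v$i))^2)"
  unfolding vnorm_def by simp

lemma vnorm_smult: assumes "v \<in> carrier_vec n" shows "vnorm (k \<cdot>\<^sub>v v) = cmod k * vnorm v"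
proof -
  have "vnorm (k \<cdot>\<^sub>v v) = sqrt (\<Sum>i<n. (cmod k)^2 * (cmod (v$i))^2)"
    using assms by (simp add: vnorm_sum[of _ n] norm_mult power_mult_distrib)
  also have "\<dots> = sqrt ((cmod k)^2 * (\<Sum>i<n. (cmod (v$i))^2))" by (simp add: sum_distrib_left)
  also have "\<dots> = cmod k * vnorm v" using assms by (simp add: real_sqrt_mult vnorm_sum[of _ n])
  finally show ?thesis .
qed

lemma op_norm_bound: assumes M: "M \<in> carrier_mat a b" and x: "x \<in> carrier_vec b"
  shows "vnorm (M *\<^sub>v x) \<le> op_norm M * vnorm x"
proof -
  define S where "S = {vnorm (M *\<^sub>v v) | v. v \<in> carrier_vec (dim_col M) \<and> vnorm v \<le> 1}"
  define R where "R = sqrt (\<Sum>i<a. (\<Sum>j<b. cmod (M $$ (i,j)))^2)"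
  have bdd: "bdd_above S"
  proof (rule bdd_aboveI)
    fix z assume "z \<in> S"
    then obtain v where v: "v \<in> carrier_vec b" "vnorm v \<le> 1" and z: "z = vnorm (M *\<^sub>v v)"
      using M unfolding S_def by auto
    have vj: "cmod (v$j) \<le> 1" if "j < b" for j
    proof -
      have "(cmod (v$j))^2 \<le> (\<Sum>i<b. (cmod (v$i))^2)"
        using that by (intro member_le_sum) auto
      also have "\<dots> \<le> 1" using v vnorm_sum[OF v(1)] by (metis real_sqrt_le_1_iff)
      finally show ?thesis by (simp add: power_le_one_iff)
    qed
    have Mv: "cmod ((M *\<^sub>v v) $ i) \<le> (\<Sum>j<b. cmod (M $$ (i,j)))" if "i < a" for i
    proof -
      have "cmod ((M *\<^sub>v v) $ i) = cmod (\<Sum>j<b. M $$ (i,j) * v $ j)" using mult_mat_vec_sum[OF M v(1) that] by simp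
      also have "\<dots> \<le> (\<Sum>j<b. cmod (M $$ (i,j) * v $ j))" by (rule norm_sum)
      also have "\<dots> \<le> (\<Sum>j<b. cmod (M $$ (i,j)))"
        by (intro sum_mono) (use vj in \<open>auto simp: norm_mult intro: mult_left_le\<close>)
      finally show ?thesis .
    qed
    have "z = sqrt (\<Sum>i<a. (cmod ((M *\<^sub>v v) $ i))^2)" using z M v by (simp add: vnorm_sum[of _ a])
    also have "\<dots> \<le> R" unfolding R_def
      by (intro real_sqrt_le_mono sum_mono power_mono) (use Mv in auto)
    finally show "z \<le> R" .
  qed
  show ?thesis
  proof (cases "vnorm x = 0")
    case True
    then have "(\<Sum>i<b. (cmod (x$i))^2) = 0" using vnorm_sum[OF x] by simp
    then have "\<forall>i\<in>{..<b}. (cmod (x$i))^2 = 0" by (subst sum_nonneg_eq_0_iff[symmetric]) auto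
    then have "x = 0\<^sub>v b" using x by (auto intro!: eq_vecI)
    then have "M *\<^sub>v x = 0\<^sub>v a" using M by auto
    then show ?thesis using True by (simp add: vnorm_def)
  next
    case False
    define r where "r = vnorm x"
    have "r \<ge> 0" unfolding r_def vnorm_def by (simp add: sum_nonneg)
    then have r: "r > 0" using False r_def by simp
    define y where "y = complex_of_real (1 / r) \<cdot>\<^sub>v x"
    have yc: "y \<in> carrier_vec b" using x by (simp add: y_def)
    have "vnorm y = cmod (complex_of_real (1 / r)) * r" using vnorm_smult[OF x] unfolding y_def r_def by simp
    also have "cmod (complex_of_real (1 / r)) = 1 / r" using r by (simp only: norm_of_real) simp
    also have "1 / r * r = 1" using r by simp
    finally have "vnorm y = 1" .
    then have "vnorm (M *\<^sub>v y) \<in> S" unfolding S_def using yc M by auto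
    then have "vnorm (M *\<^sub>v y) \<le> op_norm M" unfolding op_norm_def S_def[symmetric] using bdd by (rule cSup_upper)
    moreover have "vnorm (M *\<^sub>v y) = vnorm (M *\<^sub>v x) / r"
    proof -
      have "vnorm (M *\<^sub>v y) = cmod (complex_of_real (1 / r)) * vnorm (M *\<^sub>v x)"
        unfolding y_def mult_mat_vec[OF M x] using vnorm_smult[of "M *\<^sub>v x" a] M x by simp
      also have "cmod (complex_of_real (1 / r)) = 1 / r" using r by (simp only: norm_of_real) simp
      finally show ?thesis by simp
    qed
    ultimately have "vnorm (M *\<^sub>v x) / r \<le> op_norm M" by simp
    then show ?thesis using r unfolding r_def by (simp add: pos_divide_le_eq)
  qed
qed

lemma op_norm_bil: assumes M: "M \<in> carrier_mat a b"
  shows "cmod (\<Sum>i<a. \<Sum>j<b. cnj (\<alpha> i) * M$$(i,j) * \<beta> j)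
     \<le> op_norm M * sqrt (\<Sum>i<a. (cmod (\<alpha> i))^2) * sqrt (\<Sum>j<b. (cmod (\<beta> j))^2)"
proof -
  define bv where "bv = vec b \<beta>"
  have bv: "bv \<in> carrier_vec b" by (simp add: bv_def)
  have "(\<Sum>i<a. \<Sum>j<b. cnj (\<alpha> i) * M$$(i,j) * \<beta> j) = (\<Sum>i<a. cnj (\<alpha> i) * (M *\<^sub>v bv) $ i)"
  proof (intro sum.cong refl)
    fix i assume "i \<in> {..<a}"
    then have "(M *\<^sub>v bv) $ i = (\<Sum>j<b. M$$(i,j) * bv $ j)" using mult_mat_vec_sum[OF M bv] by simp
    also have "\<dots> = (\<Sum>j<b. M$$(i,j) * \<beta> j)" by (simp add: bv_def)
    finally show "(\<Sum>j<b. cnj (\<alpha> i) * M$$(i,j) * \<beta> j) = cnj (\<alpha> i) * (M *\<^sub>v bv) $ i"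
      by (simp add: sum_distrib_left mult.assoc)
  qed
  then have 1: "cmod (\<Sum>i<a. \<Sum>j<b. cnj (\<alpha> i) * M$$(i,j) * \<beta> j)
      \<le> sqrt (\<Sum>i<a. (cmod (\<alpha> i))^2) * sqrt (\<Sum>i<a. (cmod ((M *\<^sub>v bv) $ i))^2)"
    using cs_complex[where x=\<alpha> and S="{..<a}" and y="\<lambda>i. (M *\<^sub>v bv) $ i"] by simp
  have "sqrt (\<Sum>i<a. (cmod ((M *\<^sub>v bv) $ i))^2) = vnorm (M *\<^sub>v bv)"
    using M bv by (simp add: vnorm_sum[of _ a])
  also have "\<dots> \<le> op_norm M * vnorm bv" by (rule op_norm_bound[OF M bv])
  also have "vnorm bv = sqrt (\<Sum>j<b. (cmod (\<beta> j))^2)" unfolding vnorm_sum[OF bv] by (simp add: bv_def)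
  finally have 2: "sqrt (\<Sum>i<a. (cmod ((M *\<^sub>v bv) $ i))^2) \<le> op_norm M * sqrt (\<Sum>j<b. (cmod (\<beta> j))^2)" .
  show ?thesis using order_trans[OF 1 mult_left_mono[OF 2 real_sqrt_ge_zero[OF sum_nonneg]]]
    by (simp add: mult_ac)
qed

lemma exists_nonzero_sol:
  fixes B :: "nat \<Rightarrow> nat \<Rightarrow> complex"
  assumes "r < d"
  shows "\<exists>c. c \<in> carrier_vec d \<and> c \<noteq> 0\<^sub>v d \<and> (\<forall>l<r. (\<Sum>k<d. B l k * c$k) = 0)"
proof (cases "r = 0")
  case True
  have "unit_vec d 0 $ 0 = (1::complex)" using assms by simp
  then have "unit_vec d 0 \<noteq> (0\<^sub>v d :: complex vec)" using assms by auto
  then show ?thesis using assms True by (intro exI[of _ "unit_vec d 0"]) auto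
next
  case False
  define Bm where "Bm = mat d d (\<lambda>(l,k). B (min l (r-1)) k)"
  have Bm: "Bm \<in> carrier_mat d d" by (simp add: Bm_def)
  have "det Bm = 0"
    by (rule det_identical_rows[OF Bm, of "r-1" r]) (use False assms in \<open>auto simp: Bm_def intro!: eq_vecI\<close>)
  then obtain v where v: "v \<in> carrier_vec d" "v \<noteq> 0\<^sub>v d" "Bm *\<^sub>v v = 0\<^sub>v d"
    using det_0_iff_vec_prod_zero[OF Bm] by auto
  have "(\<Sum>k<d. B l k * v$k) = 0" if l: "l < r" for l
  proof -
    have "(Bm *\<^sub>v v) $ l = 0" using v(3) l assms by simp
    then show ?thesis using mult_mat_vec_sum[OF Bm v(1), of l] l assms by (simp add: Bm_def)
  qed
  then show ?thesis using v by blast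
qed

lemma op_norm_nonneg: assumes M: "M \<in> carrier_mat a b" and b: "b > 0"
  shows "op_norm M \<ge> 0"
proof -
  have u: "unit_vec b 0 \<in> carrier_vec b" by simp
  have "(\<Sum>i<b. (cmod (unit_vec b 0 $ i :: complex))^2) = (\<Sum>i<b. if i = 0 then 1 else 0)"
    by (intro sum.cong refl) (auto simp: unit_vec_def)
  also have "\<dots> = 1" using b by simp
  finally have "vnorm (unit_vec b 0 :: complex vec) = 1" unfolding vnorm_sum[OF u] by simp
  moreover have "vnorm (M *\<^sub>v unit_vec b 0) \<ge> 0" unfolding vnorm_def by (simp add: sum_nonneg)
  ultimately have "0 \<le> op_norm M * 1" using op_norm_bound[OF M u] by simp
  then show ?thesis by simp
qed

lemma cs2: fixes a b c d :: real shows "a * c + b * d \<le> sqrt (a^2 + b^2) * sqrt (c^2 + d^2)"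
proof -
  have "(a * c + b * d)^2 \<le> (a^2 + b^2) * (c^2 + d^2)"
  proof -
    have "0 \<le> (a * d - b * c)^2" by simp
    then show ?thesis by (simp add: power2_eq_square algebra_simps)
  qed
  then have "\<bar>a * c + b * d\<bar>^2 \<le> (a^2 + b^2) * (c^2 + d^2)" by simp
  then have "\<bar>a * c + b * d\<bar> \<le> sqrt ((a^2 + b^2) * (c^2 + d^2))" by (rule real_le_rsqrt)
  then show ?thesis by (simp add: real_sqrt_mult)
qed

lemma two_sqrt_le: fixes a b :: real assumes "a \<ge> 0" "b \<ge> 0" shows "2 * (sqrt a * sqrt b) \<le> a + b"
proof -
  have "0 \<le> (sqrt a - sqrt b)^2" by simp
  then show ?thesis using assms by (simp add: power2_eq_square algebra_simps)
qed

locale two_bases =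
  fixes N :: nat and E F :: "nat \<Rightarrow> complex vec"
  assumes E: "onb N E" and F: "onb N F"
begin

lemma Ec: "i < N \<Longrightarrow> E i \<in> carrier_vec N" using E by (auto simp: onb_def)
lemma Fc: "i < N \<Longrightarrow> F i \<in> carrier_vec N" using F by (auto simp: onb_def)
lemma Eon: "i < N \<Longrightarrow> j < N \<Longrightarrow> braket (E i) (E j) = (if i = j then 1 else 0)" using E by (auto simp: onb_def)
lemma Fon: "i < N \<Longrightarrow> j < N \<Longrightarrow> braket (F i) (F j) = (if i = j then 1 else 0)" using F by (auto simp: onb_def)

definition Pe :: "nat \<Rightarrow> complex vec \<Rightarrow> real" where "Pe m x = (\<Sum>i<m. (cmod (braket (E i) x))^2)"
definition Pf :: "nat \<Rightarrow> complex vec \<Rightarrow> real" where "Pf n x = (\<Sum>j<n. (cmod (braket (F j) x))^2)"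

lemma Pe_nonneg: "Pe m x \<ge> 0" unfolding Pe_def by (simp add: sum_nonneg)
lemma Pf_nonneg: "Pf n x \<ge> 0" unfolding Pf_def by (simp add: sum_nonneg)

lemma Pe_le: assumes "m \<le> N" "x \<in> carrier_vec N" shows "Pe m x \<le> nsq x"
proof -
  have "Pe m x \<le> (\<Sum>i<N. (cmod (braket (E i) x))^2)" unfolding Pe_def
    using assms(1) by (intro sum_mono2) auto
  also have "\<dots> = nsq x" unfolding nsq_def by (rule onb_parseval[OF E assms(2)])
  finally show ?thesis .
qed

lemma Pf_le: assumes "n \<le> N" "x \<in> carrier_vec N" shows "Pf n x \<le> nsq x"
proof -
  have "Pf n x \<le> (\<Sum>i<N. (cmod (braket (F i) x))^2)" unfolding Pf_def
    using assms(1) by (intro sum_mono2) auto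
  also have "\<dots> = nsq x" unfolding nsq_def by (rule onb_parseval[OF F assms(2)])
  finally show ?thesis .
qed

lemma cross_bound:
  fixes \<alpha> \<beta> :: "nat \<Rightarrow> complex"
  assumes pq: "p + q \<le> N" and n: "n \<le> N" and sig: "\<sigma> \<ge> 0"
  and HB: "\<And>a b. cmod (\<Sum>k<q. \<Sum>j<n. cnj (a k) * braket (E (p+k)) (F j) * b j)
            \<le> \<sigma> * sqrt (\<Sum>k<q. (cmod (a k))^2) * sqrt (\<Sum>j<n. (cmod (b j))^2)"
  defines "e \<equiv> lc N {..<q} \<alpha> (\<lambda>k. E (p+k))" and "f \<equiv> lc N {..<n} \<beta> F"
  shows "nsq (e + f) \<le> (\<Sum>k<q. (cmod (\<alpha> k))^2) + (\<Sum>j<n. (cmod (\<beta> j))^2) + 2 * (\<sigma> * sqrt (\<Sum>k<q. (cmod (\<alpha> k))^2) * sqrt (\<Sum>j<n. (cmod (\<beta> j))^2))"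
    "nsq (e + f) \<ge> (\<Sum>k<q. (cmod (\<alpha> k))^2) + (\<Sum>j<n. (cmod (\<beta> j))^2) - 2 * (\<sigma> * sqrt (\<Sum>k<q. (cmod (\<alpha> k))^2) * sqrt (\<Sum>j<n. (cmod (\<beta> j))^2))"
proof -
  define a2 where "a2 = (\<Sum>k<q. (cmod (\<alpha> k))^2)"
  define b2 where "b2 = (\<Sum>j<n. (cmod (\<beta> j))^2)"
  have ec: "e \<in> carrier_vec N" and fc: "f \<in> carrier_vec N" by (simp_all add: e_def f_def)
  have Ec': "\<And>k. k \<in> {..<q} \<Longrightarrow> E (p+k) \<in> carrier_vec N" using Ec pq by auto
  have Fc': "\<And>k. k \<in> {..<n} \<Longrightarrow> F k \<in> carrier_vec N" using Fc n by auto
  have ne: "nsq e = a2" unfolding e_def a2_def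
    by (rule nsq_lc) (use Ec' Eon pq in auto)
  have nf: "nsq f = b2" unfolding f_def b2_def
    by (rule nsq_lc) (use Fc' Fon n in auto)
  have bef: "braket e f = (\<Sum>k<q. \<Sum>j<n. cnj (\<alpha> k) * braket (E (p+k)) (F j) * \<beta> j)"
  proof -
    have "braket e f = (\<Sum>k<q. cnj (\<alpha> k) * braket (E (p+k)) f)" unfolding e_def
      by (rule braket_lc_left[OF fc]) (use Ec' in auto)
    also have "\<dots> = (\<Sum>k<q. \<Sum>j<n. cnj (\<alpha> k) * braket (E (p+k)) (F j) * \<beta> j)"
    proof (intro sum.cong refl)
      fix k assume k: "k \<in> {..<q}"
      have "braket (E (p+k)) f = (\<Sum>j<n. \<beta> j * braket (E (p+k)) (F j))" unfolding f_def
        by (rule braket_lc_right) (use Ec' Fc' k in auto)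
      then show "cnj (\<alpha> k) * braket (E (p+k)) f = (\<Sum>j<n. cnj (\<alpha> k) * braket (E (p+k)) (F j) * \<beta> j)"
        by (simp add: sum_distrib_left mult_ac)
    qed
    finally show ?thesis .
  qed
  have hb: "cmod (braket e f) \<le> \<sigma> * sqrt a2 * sqrt b2" unfolding bef a2_def b2_def by (rule HB)
  have "braket (e + f) (e + f) = braket e e + braket f e + (braket e f + braket f f)"
    using ec fc by (simp add: braket_add_left[of _ N] braket_add_right[of _ N])
  also have "braket f e = cnj (braket e f)" using braket_cnj[OF ec fc] by simp
  finally have "nsq (e + f) = nsq e + nsq f + 2 * Re (braket e f)" unfolding nsq_def by simp
  then have eq: "nsq (e + f) = a2 + b2 + 2 * Re (braket e f)" using ne nf by simp
  have "\<bar>Re (braket e f)\<bar> \<le> \<sigma> * sqrt a2 * sqrt b2" using hb abs_Re_le_cmod order_trans by blast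
  then show "nsq (e + f) \<le> a2 + b2 + 2 * (\<sigma> * sqrt a2 * sqrt b2)"
    "nsq (e + f) \<ge> a2 + b2 - 2 * (\<sigma> * sqrt a2 * sqrt b2)" using eq by linarith+
qed

end

lemma real_up: fixes T X Y s :: real
  assumes "T \<ge> 0" "X \<ge> 0" "Y \<ge> 0" "s \<ge> 0" "T \<le> sqrt X * sqrt Y" "Y \<le> (1+s) * T"
  shows "T \<le> (1+s) * X"
proof (cases "T = 0")
  case True then show ?thesis using assms by simp
next
  case False
  then have T: "T > 0" using assms by simp
  have "T * T \<le> (sqrt X * sqrt Y) * (sqrt X * sqrt Y)" using assms T by (intro mult_mono) auto
  also have "\<dots> = X * Y" using assms by (simp add: algebra_simps)
  also have "\<dots> \<le> X * ((1+s) * T)" using assms by (intro mult_left_mono) auto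
  finally have "T * T \<le> ((1+s) * X) * T" by (simp add: algebra_simps)
  then show ?thesis using T by simp
qed

lemma real_low: fixes T X P s :: real
  assumes "X > 0" "s < 1" "T \<ge> 0" "P \<ge> 0" "X \<le> sqrt P * sqrt T" "(1-s) * T \<le> X"
  shows "(1-s) * X \<le> P"
proof -
  have "X * X \<le> (sqrt P * sqrt T) * (sqrt P * sqrt T)" using assms by (intro mult_mono) auto
  also have "\<dots> = P * T" using assms by (simp add: algebra_simps)
  finally have 1: "X * X \<le> P * T" .
  have "(1-s) * (X * X) \<le> (1-s) * (P * T)" using 1 assms by (intro mult_left_mono) auto
  also have "\<dots> = P * ((1-s) * T)" by simp
  also have "\<dots> \<le> P * X" using assms by (intro mult_left_mono) auto
  finally have "((1-s) * X) * X \<le> P * X" by (simp add: algebra_simps)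
  then show ?thesis using assms by simp
qed


context two_bases begin

lemma upper_bound:
  assumes pq: "p + q = m" "m \<le> N" and n: "n \<le> N" and sig: "\<sigma> \<ge> 0"
  and HB: "\<And>a b. cmod (\<Sum>k<q. \<Sum>j<n. cnj (a k) * braket (E (p+k)) (F j) * b j)
            \<le> \<sigma> * sqrt (\<Sum>k<q. (cmod (a k))^2) * sqrt (\<Sum>j<n. (cmod (b j))^2)"
  and x: "x \<in> carrier_vec N" and orth: "\<And>i. i < p \<Longrightarrow> braket (E i) x = 0"
  shows "Pe m x + Pf n x \<le> (1 + \<sigma>) * nsq x"
proof -
  define \<alpha> where "\<alpha> k = braket (E (p+k)) x" for k
  define \<beta> where "\<beta> j = braket (F j) x" for j
  define e where "e = lc N {..<q} \<alpha> (\<lambda>k. E (p+k))"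
  define f where "f = lc N {..<n} \<beta> F"
  define a2 where "a2 = (\<Sum>k<q. (cmod (\<alpha> k))^2)"
  define b2 where "b2 = (\<Sum>j<n. (cmod (\<beta> j))^2)"
  have ec: "e \<in> carrier_vec N" and fc: "f \<in> carrier_vec N" by (simp_all add: e_def f_def)
  have Ec': "\<And>k. k \<in> {..<q} \<Longrightarrow> E (p+k) \<in> carrier_vec N" using Ec pq by auto
  have Fc': "\<And>k. k \<in> {..<n} \<Longrightarrow> F k \<in> carrier_vec N" using Fc n by auto
  have a2: "a2 = Pe m x"
  proof -
    have "Pe m x = (\<Sum>i<p. (cmod (braket (E i) x))^2) + a2"
      unfolding Pe_def a2_def \<alpha>_def pq(1)[symmetric] by (rule sum_lessThan_add)
    also have "(\<Sum>i<p. (cmod (braket (E i) x))^2) = 0" using orth by simp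
    finally show ?thesis by simp
  qed
  have b2: "b2 = Pf n x" unfolding b2_def Pf_def \<beta>_def ..
  have a2n: "a2 \<ge> 0" and b2n: "b2 \<ge> 0" unfolding a2_def b2_def by (simp_all add: sum_nonneg)
  have cb: "nsq (e + f) \<le> a2 + b2 + 2 * (\<sigma> * sqrt a2 * sqrt b2)"
    using cross_bound(1)[where \<alpha>=\<alpha> and \<beta>=\<beta>, OF _ n sig HB] pq unfolding e_def f_def a2_def b2_def by simp
  have "2 * (\<sigma> * sqrt a2 * sqrt b2) = \<sigma> * (2 * (sqrt a2 * sqrt b2))" by simp
  also have "\<dots> \<le> \<sigma> * (a2 + b2)" using two_sqrt_le[OF a2n b2n] sig by (intro mult_left_mono) auto
  finally have Y: "nsq (e + f) \<le> (1 + \<sigma>) * (a2 + b2)" using cb by (simp add: algebra_simps)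
  have bxe: "braket x e = of_real a2"
  proof -
    have "braket x e = (\<Sum>k<q. \<alpha> k * braket x (E (p+k)))" unfolding e_def
      by (rule braket_lc_right[OF x]) (use Ec' in auto)
    also have "\<dots> = (\<Sum>k<q. of_real ((cmod (\<alpha> k))^2))"
    proof (intro sum.cong refl)
      fix k assume "k \<in> {..<q}"
      then have "braket x (E (p+k)) = cnj (\<alpha> k)" unfolding \<alpha>_def using braket_cnj[OF Ec' x] by auto
      then show "\<alpha> k * braket x (E (p+k)) = of_real ((cmod (\<alpha> k))^2)"
        by (simp add: complex_norm_square del: of_real_power)
    qed
    finally show ?thesis unfolding a2_def by simp
  qed
  have bxf: "braket x f = of_real b2"
  proof -
    have "braket x f = (\<Sum>j<n. \<beta> j * braket x (F j))" unfolding f_def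
      by (rule braket_lc_right[OF x]) (use Fc' in auto)
    also have "\<dots> = (\<Sum>j<n. of_real ((cmod (\<beta> j))^2))"
    proof (intro sum.cong refl)
      fix k assume "k \<in> {..<n}"
      then have "braket x (F k) = cnj (\<beta> k)" unfolding \<beta>_def using braket_cnj[OF Fc' x] by auto
      then show "\<beta> k * braket x (F k) = of_real ((cmod (\<beta> k))^2)"
        by (simp add: complex_norm_square del: of_real_power)
    qed
    finally show ?thesis unfolding b2_def by simp
  qed
  have "braket x (e + f) = of_real (a2 + b2)" using braket_add_right[OF x ec fc] bxe bxf by simp
  then have "cmod (braket x (e + f)) = cmod (complex_of_real (a2 + b2))" by simp
  also have "\<dots> = a2 + b2" using a2n b2n by (simp only: norm_of_real)
  finally have "a2 + b2 = cmod (braket x (e + f))" by simp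
  also have "\<dots> \<le> sqrt (nsq x) * sqrt (nsq (e + f))" by (rule cs_vec[OF x]) (use ec fc in simp)
  finally have T: "a2 + b2 \<le> sqrt (nsq x) * sqrt (nsq (e + f))" .
  have "a2 + b2 \<le> (1 + \<sigma>) * nsq x"
    by (rule real_up[OF _ nsq_nonneg[OF x] nsq_nonneg[of _ N] sig T Y]) (use a2n b2n ec fc in auto)
  then show ?thesis using a2 b2 by simp
qed

lemma lower_bound:
  fixes \<alpha> \<beta> :: "nat \<Rightarrow> complex"
  assumes pq: "p + q = m" "m \<le> N" and n: "n \<le> N" and sig: "\<sigma> \<ge> 0" "\<sigma> < 1"
  and HB: "\<And>a b. cmod (\<Sum>k<q. \<Sum>j<n. cnj (a k) * braket (E (p+k)) (F j) * b j)
            \<le> \<sigma> * sqrt (\<Sum>k<q. (cmod (a k))^2) * sqrt (\<Sum>j<n. (cmod (b j))^2)"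
  and nz: "(\<Sum>k<q. (cmod (\<alpha> k))^2) + (\<Sum>j<n. (cmod (\<beta> j))^2) > 0"
  defines "x \<equiv> lc N {..<q} \<alpha> (\<lambda>k. E (p+k)) + lc N {..<n} \<beta> F"
  shows "nsq x > 0" "(1 - \<sigma>) * nsq x \<le> Pe m x + Pf n x"
proof -
  define e where "e = lc N {..<q} \<alpha> (\<lambda>k. E (p+k))"
  define f where "f = lc N {..<n} \<beta> F"
  define a2 where "a2 = (\<Sum>k<q. (cmod (\<alpha> k))^2)"
  define b2 where "b2 = (\<Sum>j<n. (cmod (\<beta> j))^2)"
  have xef: "x = e + f" unfolding x_def e_def f_def ..
  have ec: "e \<in> carrier_vec N" and fc: "f \<in> carrier_vec N" by (simp_all add: e_def f_def)
  have x: "x \<in> carrier_vec N" unfolding xef using ec fc by simp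
  have Ec': "\<And>k. k \<in> {..<q} \<Longrightarrow> E (p+k) \<in> carrier_vec N" using Ec pq by auto
  have Fc': "\<And>k. k \<in> {..<n} \<Longrightarrow> F k \<in> carrier_vec N" using Fc n by auto
  have a2n: "a2 \<ge> 0" and b2n: "b2 \<ge> 0" unfolding a2_def b2_def by (simp_all add: sum_nonneg)
  have cb: "nsq x \<ge> a2 + b2 - 2 * (\<sigma> * sqrt a2 * sqrt b2)"
    using cross_bound(2)[where \<alpha>=\<alpha> and \<beta>=\<beta>, OF _ n sig(1) HB] pq unfolding xef e_def f_def a2_def b2_def by simp
  have "2 * (\<sigma> * sqrt a2 * sqrt b2) = \<sigma> * (2 * (sqrt a2 * sqrt b2))" by simp
  also have "\<dots> \<le> \<sigma> * (a2 + b2)" using two_sqrt_le[OF a2n b2n] sig by (intro mult_left_mono) auto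
  finally have L: "(1 - \<sigma>) * (a2 + b2) \<le> nsq x" using cb by (simp add: algebra_simps)
  have "0 < (1 - \<sigma>) * (a2 + b2)" using nz sig unfolding a2_def b2_def by simp
  then show X: "nsq x > 0" using L by simp
  define pe where "pe = (\<Sum>k<q. (cmod (braket (E (p+k)) x))^2)"
  have pe: "pe \<le> Pe m x"
  proof -
    have "Pe m x = (\<Sum>i<p. (cmod (braket (E i) x))^2) + pe"
      unfolding Pe_def pe_def pq(1)[symmetric] by (rule sum_lessThan_add)
    moreover have "(\<Sum>i<p. (cmod (braket (E i) x))^2) \<ge> 0" by (simp add: sum_nonneg)
    ultimately show ?thesis by simp
  qed
  have pen: "pe \<ge> 0" unfolding pe_def by (simp add: sum_nonneg)
  have bxe: "cmod (braket x e) \<le> sqrt pe * sqrt a2"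
  proof -
    have "braket x e = (\<Sum>k<q. \<alpha> k * braket x (E (p+k)))" unfolding e_def
      by (rule braket_lc_right[OF x]) (use Ec' in auto)
    also have "\<dots> = (\<Sum>k<q. cnj (braket (E (p+k)) x) * \<alpha> k)"
      by (intro sum.cong refl) (use braket_cnj[OF Ec' x] in auto)
    finally have "cmod (braket x e) = cmod (\<Sum>k<q. cnj (braket (E (p+k)) x) * \<alpha> k)" by simp
    also have "\<dots> \<le> sqrt pe * sqrt a2" unfolding pe_def a2_def by (rule cs_complex)
    finally show ?thesis .
  qed
  have bxf: "cmod (braket x f) \<le> sqrt (Pf n x) * sqrt b2"
  proof -
    have "braket x f = (\<Sum>j<n. \<beta> j * braket x (F j))" unfolding f_def
      by (rule braket_lc_right[OF x]) (use Fc' in auto)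
    also have "\<dots> = (\<Sum>j<n. cnj (braket (F j) x) * \<beta> j)"
      by (intro sum.cong refl) (use braket_cnj[OF Fc' x] in auto)
    finally have "cmod (braket x f) = cmod (\<Sum>j<n. cnj (braket (F j) x) * \<beta> j)" by simp
    also have "\<dots> \<le> sqrt (Pf n x) * sqrt b2" unfolding Pf_def b2_def by (rule cs_complex)
    finally show ?thesis .
  qed
  have "nsq x = Re (braket x e + braket x f)" unfolding nsq_def using braket_add_right[OF x ec fc] xef by simp
  also have "\<dots> \<le> cmod (braket x e) + cmod (braket x f)"
    using complex_Re_le_cmod[of "braket x e"] complex_Re_le_cmod[of "braket x f"] by simp
  also have "\<dots> \<le> sqrt pe * sqrt a2 + sqrt (Pf n x) * sqrt b2" using bxe bxf by simp
  also have "\<dots> \<le> sqrt ((sqrt pe)^2 + (sqrt (Pf n x))^2) * sqrt ((sqrt a2)^2 + (sqrt b2)^2)" by (rule cs2)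
  also have "\<dots> = sqrt (pe + Pf n x) * sqrt (a2 + b2)" using pen a2n b2n Pf_nonneg by simp
  finally have U: "nsq x \<le> sqrt (pe + Pf n x) * sqrt (a2 + b2)" .
  have "(1 - \<sigma>) * nsq x \<le> pe + Pf n x"
    by (rule real_low[OF X sig(2) _ _ U L]) (use a2n b2n pen Pf_nonneg in auto)
  then show "(1 - \<sigma>) * nsq x \<le> Pe m x + Pf n x" using pe by simp
qed

end

context two_bases begin

definition Amat :: "nat \<Rightarrow> nat \<Rightarrow> complex mat" where
  "Amat m n = mat N N (\<lambda>(a,b). (\<Sum>i<m. E i $ a * cnj (E i $ b)) + (\<Sum>j<n. F j $ a * cnj (F j $ b)))"

lemma Amat_c: "Amat m n \<in> carrier_mat N N" by (simp add: Amat_def)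

lemma Amat_herm: "\<forall>i<N. \<forall>j<N. Amat m n $$ (i,j) = cnj (Amat m n $$ (j,i))"
  by (simp add: Amat_def cnj_sum mult.commute)

lemma Amat_quad: assumes mn: "m \<le> N" "n \<le> N" and x: "x \<in> carrier_vec N"
  shows "braket x (Amat m n *\<^sub>v x) = of_real (Pe m x + Pf n x)"
proof -
  have "braket x (Amat m n *\<^sub>v x) = (\<Sum>a<N. \<Sum>b<N. cnj (x$a) * Amat m n $$ (a,b) * x $ b)"
    by (rule braket_Mv[OF Amat_c x x])
  also have "\<dots> = (\<Sum>i<m. (\<Sum>a<N. cnj (x$a) * E i $ a) * (\<Sum>b<N. cnj (E i $ b) * x $ b))
      + (\<Sum>j<n. (\<Sum>a<N. cnj (x$a) * F j $ a) * (\<Sum>b<N. cnj (F j $ b) * x $ b))"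
  proof -
    have "(\<Sum>a<N. \<Sum>b<N. cnj (x$a) * Amat m n $$ (a,b) * x $ b)
       = (\<Sum>a<N. \<Sum>b<N. \<Sum>i<m. cnj (x$a) * E i $ a * (cnj (E i $ b) * x $ b))
       + (\<Sum>a<N. \<Sum>b<N. \<Sum>j<n. cnj (x$a) * F j $ a * (cnj (F j $ b) * x $ b))"
      by (simp add: Amat_def sum.distrib sum_distrib_left sum_distrib_right algebra_simps)
    also have "(\<Sum>a<N. \<Sum>b<N. \<Sum>i<m. cnj (x$a) * E i $ a * (cnj (E i $ b) * x $ b))
      = (\<Sum>i<m. (\<Sum>a<N. cnj (x$a) * E i $ a) * (\<Sum>b<N. cnj (E i $ b) * x $ b))"
    proof -
      have "(\<Sum>a<N. \<Sum>b<N. \<Sum>i<m. cnj (x$a) * E i $ a * (cnj (E i $ b) * x $ b))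
          = (\<Sum>a<N. \<Sum>i<m. \<Sum>b<N. cnj (x$a) * E i $ a * (cnj (E i $ b) * x $ b))"
        by (rule sum.cong[OF refl], rule sum.swap)
      also have "\<dots> = (\<Sum>i<m. \<Sum>a<N. \<Sum>b<N. cnj (x$a) * E i $ a * (cnj (E i $ b) * x $ b))"
        by (rule sum.swap)
      also have "\<dots> = (\<Sum>i<m. (\<Sum>a<N. cnj (x$a) * E i $ a) * (\<Sum>b<N. cnj (E i $ b) * x $ b))"
        by (simp add: sum_product)
      finally show ?thesis .
    qed
    also have "(\<Sum>a<N. \<Sum>b<N. \<Sum>j<n. cnj (x$a) * F j $ a * (cnj (F j $ b) * x $ b))
      = (\<Sum>j<n. (\<Sum>a<N. cnj (x$a) * F j $ a) * (\<Sum>b<N. cnj (F j $ b) * x $ b))"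
    proof -
      have "(\<Sum>a<N. \<Sum>b<N. \<Sum>j<n. cnj (x$a) * F j $ a * (cnj (F j $ b) * x $ b))
          = (\<Sum>a<N. \<Sum>j<n. \<Sum>b<N. cnj (x$a) * F j $ a * (cnj (F j $ b) * x $ b))"
        by (rule sum.cong[OF refl], rule sum.swap)
      also have "\<dots> = (\<Sum>j<n. \<Sum>a<N. \<Sum>b<N. cnj (x$a) * F j $ a * (cnj (F j $ b) * x $ b))"
        by (rule sum.swap)
      also have "\<dots> = (\<Sum>j<n. (\<Sum>a<N. cnj (x$a) * F j $ a) * (\<Sum>b<N. cnj (F j $ b) * x $ b))"
        by (simp add: sum_product)
      finally show ?thesis .
    qed
    finally show ?thesis .
  qed
  also have "\<dots> = (\<Sum>i<m. cnj (braket (E i) x) * braket (E i) x) + (\<Sum>j<n. cnj (braket (F j) x) * braket (F j) x)"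
  proof -
    have e: "(\<Sum>a<N. cnj (x$a) * E i $ a) = cnj (braket (E i) x)" if "i < m" for i
    proof -
      have "cnj (braket (E i) x) = braket x (E i)" using braket_cnj[OF Ec x] that mn by simp
      also have "\<dots> = (\<Sum>a<N. cnj (x$a) * E i $ a)" by (rule braket_sum[OF x])
      finally show ?thesis by simp
    qed
    have f: "(\<Sum>a<N. cnj (x$a) * F i $ a) = cnj (braket (F i) x)" if "i < n" for i
    proof -
      have "cnj (braket (F i) x) = braket x (F i)" using braket_cnj[OF Fc x] that mn by simp
      also have "\<dots> = (\<Sum>a<N. cnj (x$a) * F i $ a)" by (rule braket_sum[OF x])
      finally show ?thesis by simp
    qed
    have e2: "(\<Sum>b<N. cnj (E i $ b) * x $ b) = braket (E i) x" if "i < m" for i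
      using braket_sum[OF Ec, of i x] that mn by simp
    have f2: "(\<Sum>b<N. cnj (F i $ b) * x $ b) = braket (F i) x" if "i < n" for i
      using braket_sum[OF Fc, of i x] that mn by simp
    show ?thesis using e f e2 f2 by simp
  qed
  also have "\<dots> = of_real (Pe m x + Pf n x)"
    by (simp add: Pe_def Pf_def complex_norm_square mult.commute del: of_real_power)
  finally show ?thesis .
qed

end

locale Asetup = two_bases +
  fixes m n :: nat and w :: "nat \<Rightarrow> complex vec" and \<mu> :: "nat \<Rightarrow> real"
  assumes mn: "n \<le> m" "m \<le> N"
  and w: "onb N w" and weig: "\<forall>i<N. Amat m n *\<^sub>v w i = complex_of_real (\<mu> i) \<cdot>\<^sub>v w i"
  and \<mu>sort: "\<forall>i j. i \<le> j \<longrightarrow> j < N \<longrightarrow> \<mu> j \<le> \<mu> i"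
begin

lemma wc: "j < N \<Longrightarrow> w j \<in> carrier_vec N" using w by (auto simp: onb_def)

lemma quadA: assumes x: "x \<in> carrier_vec N"
  shows "Pe m x + Pf n x = (\<Sum>j<N. \<mu> j * (cmod (braket (w j) x))^2)"
proof -
  have "complex_of_real (Pe m x + Pf n x) = braket x (Amat m n *\<^sub>v x)"
    using Amat_quad[OF _ _ x] mn by simp
  also have "\<dots> = (\<Sum>j<N. complex_of_real (\<mu> j) * of_real ((cmod (braket (w j) x))^2))"
    by (rule onb_quad[OF w Amat_c _ x]) (use weig in auto)
  also have "\<dots> = complex_of_real (\<Sum>j<N. \<mu> j * (cmod (braket (w j) x))^2)" by simp
  finally show ?thesis by (simp only: of_real_eq_iff)
qed

lemma parsw: "x \<in> carrier_vec N \<Longrightarrow> nsq x = (\<Sum>j<N. (cmod (braket (w j) x))^2)"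
  unfolding nsq_def by (rule onb_parseval[OF w, symmetric])

lemma head_bound: assumes x: "x \<in> carrier_vec N" and d: "0 < d" "d \<le> N"
  and z: "\<And>j. d \<le> j \<Longrightarrow> j < N \<Longrightarrow> braket (w j) x = 0"
  shows "\<mu> (d-1) * nsq x \<le> Pe m x + Pf n x"
proof -
  have "\<mu> (d-1) * nsq x = (\<Sum>j<N. \<mu> (d-1) * (cmod (braket (w j) x))^2)"
    unfolding parsw[OF x] by (simp add: sum_distrib_left)
  also have "\<dots> \<le> (\<Sum>j<N. \<mu> j * (cmod (braket (w j) x))^2)"
  proof (intro sum_mono)
    fix j assume j: "j \<in> {..<N}"
    show "\<mu> (d-1) * (cmod (braket (w j) x))^2 \<le> \<mu> j * (cmod (braket (w j) x))^2"
    proof (cases "j < d")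
      case True then show ?thesis using \<mu>sort j d by (intro mult_right_mono) auto
    next
      case False then show ?thesis using z j by simp
    qed
  qed
  also have "\<dots> = Pe m x + Pf n x" using quadA[OF x] by simp
  finally show ?thesis .
qed

lemma tail_bound: assumes x: "x \<in> carrier_vec N" and d: "d < N"
  and z: "\<And>j. j < d \<Longrightarrow> braket (w j) x = 0"
  shows "Pe m x + Pf n x \<le> \<mu> d * nsq x"
proof -
  have "Pe m x + Pf n x = (\<Sum>j<N. \<mu> j * (cmod (braket (w j) x))^2)" using quadA[OF x] by simp
  also have "\<dots> \<le> (\<Sum>j<N. \<mu> d * (cmod (braket (w j) x))^2)"
  proof (intro sum_mono)
    fix j assume j: "j \<in> {..<N}"
    show "\<mu> j * (cmod (braket (w j) x))^2 \<le> \<mu> d * (cmod (braket (w j) x))^2"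
    proof (cases "j < d")
      case False then show ?thesis using \<mu>sort j d by (intro mult_right_mono) auto
    next
      case True then show ?thesis using z j by simp
    qed
  qed
  also have "\<dots> = \<mu> d * nsq x" unfolding parsw[OF x] by (simp add: sum_distrib_left)
  finally show ?thesis .
qed

lemma braket_w_lc: assumes c: "c \<in> carrier_vec d" and d: "d \<le> N" and j: "j < N"
  shows "braket (w j) (lc N {..<d} (\<lambda>k. c$k) w) = (if j < d then c$j else 0)"
proof -
  have "braket (w j) (lc N {..<d} (\<lambda>k. c$k) w) = (\<Sum>k<d. c$k * braket (w j) (w k))"
    by (rule braket_lc_right) (use wc j d in auto)
  also have "\<dots> = (\<Sum>k<d. c$k * (if j = k then 1 else 0))"
    using w j d by (intro sum.cong refl) (auto simp: onb_def)
  also have "\<dots> = (if j < d then c$j else 0)" by (simp add: if_distrib cong: if_cong)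
  finally show ?thesis .
qed

lemma nsq_w_lc: assumes c: "c \<in> carrier_vec d" "c \<noteq> 0\<^sub>v d" and d: "d \<le> N"
  shows "nsq (lc N {..<d} (\<lambda>k. c$k) w) > 0"
proof -
  have "nsq (lc N {..<d} (\<lambda>k. c$k) w) = (\<Sum>k<d. (cmod (c$k))^2)"
    by (rule nsq_lc) (use wc d w in \<open>auto simp: onb_def\<close>)
  also have "\<dots> > 0"
  proof (rule ccontr)
    assume "\<not> (\<Sum>k<d. (cmod (c$k))^2) > 0"
    then have "(\<Sum>k<d. (cmod (c$k))^2) = 0" using sum_nonneg[of "{..<d}" "\<lambda>k. (cmod (c$k))^2"] by simp
    then have "\<forall>k\<in>{..<d}. (cmod (c$k))^2 = 0" by (subst sum_nonneg_eq_0_iff[symmetric]) auto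
    then have "c = 0\<^sub>v d" using c(1) by (auto intro!: eq_vecI)
    then show False using c(2) by simp
  qed
  finally show ?thesis .
qed

lemma eig_upper1:
  assumes t: "t < n" and sig: "\<sigma> \<ge> 0"
  and HB: "\<And>a b. cmod (\<Sum>k<m-t. \<Sum>j<n. cnj (a k) * braket (E (t+k)) (F j) * b j)
            \<le> \<sigma> * sqrt (\<Sum>k<m-t. (cmod (a k))^2) * sqrt (\<Sum>j<n. (cmod (b j))^2)"
  shows "\<mu> t \<le> 1 + \<sigma>"
proof -
  have tN: "t + 1 \<le> N" using t mn by simp
  obtain c where c: "c \<in> carrier_vec (t+1)" "c \<noteq> 0\<^sub>v (t+1)"
    and cs: "\<forall>l<t. (\<Sum>k<t+1. braket (E l) (w k) * c$k) = 0"
    using exists_nonzero_sol[of t "t+1" "\<lambda>l k. braket (E l) (w k)"] by auto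
  define x where "x = lc N {..<t+1} (\<lambda>k. c$k) w"
  have x: "x \<in> carrier_vec N" by (simp add: x_def)
  have orth: "braket (E l) x = 0" if "l < t" for l
  proof -
    have "braket (E l) x = (\<Sum>k<t+1. c$k * braket (E l) (w k))" unfolding x_def
      by (rule braket_lc_right) (use Ec wc that t mn tN in auto)
    also have "\<dots> = 0" using cs that by (simp add: mult.commute)
    finally show ?thesis .
  qed
  have ub: "Pe m x + Pf n x \<le> (1 + \<sigma>) * nsq x"
    by (rule upper_bound[OF _ mn(2) _ sig HB x orth]) (use t mn in auto)
  have hb: "\<mu> t * nsq x \<le> Pe m x + Pf n x"
    using head_bound[OF x, of "t+1"] braket_w_lc[OF c(1) tN] tN unfolding x_def by auto
  have "nsq x > 0" unfolding x_def by (rule nsq_w_lc[OF c tN])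
  then show ?thesis using ub hb by (metis mult_le_cancel_right_pos order_trans)
qed

lemma eig_upper2:
  assumes t: "n \<le> t" "t < N"
  shows "\<mu> t \<le> 1"
proof -
  have tN: "t + 1 \<le> N" using t by simp
  obtain c where c: "c \<in> carrier_vec (t+1)" "c \<noteq> 0\<^sub>v (t+1)"
    and cs: "\<forall>l<n. (\<Sum>k<t+1. braket (F l) (w k) * c$k) = 0"
    using exists_nonzero_sol[of n "t+1" "\<lambda>l k. braket (F l) (w k)"] t by auto
  define x where "x = lc N {..<t+1} (\<lambda>k. c$k) w"
  have x: "x \<in> carrier_vec N" by (simp add: x_def)
  have orth: "braket (F l) x = 0" if "l < n" for l
  proof -
    have "braket (F l) x = (\<Sum>k<t+1. c$k * braket (F l) (w k))" unfolding x_def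
      by (rule braket_lc_right) (use Fc wc that t mn tN in auto)
    also have "\<dots> = 0" using cs that by (simp add: mult.commute)
    finally show ?thesis .
  qed
  have "Pf n x = 0" unfolding Pf_def using orth by simp
  then have ub: "Pe m x + Pf n x \<le> 1 * nsq x" using Pe_le[OF mn(2) x] by simp
  have hb: "\<mu> t * nsq x \<le> Pe m x + Pf n x"
    using head_bound[OF x, of "t+1"] braket_w_lc[OF c(1) tN] tN unfolding x_def by auto
  have "nsq x > 0" unfolding x_def by (rule nsq_w_lc[OF c tN])
  then show ?thesis using ub hb by (metis mult_le_cancel_right_pos order_trans)
qed

lemma mu_nonneg: assumes j: "j < N" shows "\<mu> j \<ge> 0"
proof -
  have "Pe m (w j) + Pf n (w j) = (\<Sum>l<N. \<mu> l * (cmod (braket (w l) (w j)))^2)" by (rule quadA[OF wc[OF j]])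
  also have "\<dots> = (\<Sum>l<N. if l = j then \<mu> l else 0)"
    using w j by (intro sum.cong refl) (auto simp: onb_def)
  also have "\<dots> = \<mu> j" using j by simp
  finally show ?thesis using Pe_nonneg[of m "w j"] Pf_nonneg[of n "w j"] by simp
qed

end

context Asetup begin

lemma mu_eq: assumes j: "j < N" shows "\<mu> j = Pe m (w j) + Pf n (w j)"
proof -
  have "Pe m (w j) + Pf n (w j) = (\<Sum>l<N. \<mu> l * (cmod (braket (w l) (w j)))^2)" by (rule quadA[OF wc[OF j]])
  also have "\<dots> = (\<Sum>l<N. if l = j then \<mu> l else 0)"
    using w j by (intro sum.cong refl) (auto simp: onb_def)
  also have "\<dots> = \<mu> j" using j by simp
  finally show ?thesis by simp
qed

lemma cmod_braket_sym: "x \<in> carrier_vec N \<Longrightarrow> y \<in> carrier_vec N \<Longrightarrow> cmod (braket x y) = cmod (braket y x)"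
  using braket_cnj[of x N y] by (metis complex_mod_cnj)

lemma trace_mu: "(\<Sum>j<N. \<mu> j) = real m + real n"
proof -
  have "(\<Sum>j<N. \<mu> j) = (\<Sum>j<N. Pe m (w j)) + (\<Sum>j<N. Pf n (w j))" by (simp add: mu_eq sum.distrib)
  also have "(\<Sum>j<N. Pe m (w j)) = (\<Sum>i<m. \<Sum>j<N. (cmod (braket (w j) (E i)))^2)"
    unfolding Pe_def by (subst sum.swap) (use Ec wc mn cmod_braket_sym in \<open>intro sum.cong refl, auto\<close>)
  also have "\<dots> = (\<Sum>i<m. 1)"
  proof (intro sum.cong refl)
    fix i assume i: "i \<in> {..<m}"
    have "(\<Sum>j<N. (cmod (braket (w j) (E i)))^2) = nsq (E i)" using parsw[of "E i"] Ec i mn by simp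
    also have "\<dots> = 1" using Eon[of i i] i mn by (simp add: nsq_def)
    finally show "(\<Sum>j<N. (cmod (braket (w j) (E i)))^2) = 1" .
  qed
  also have "(\<Sum>j<N. Pf n (w j)) = (\<Sum>i<n. \<Sum>j<N. (cmod (braket (w j) (F i)))^2)"
    unfolding Pf_def by (subst sum.swap) (use Fc wc mn cmod_braket_sym in \<open>intro sum.cong refl, auto\<close>)
  also have "\<dots> = (\<Sum>i<n. 1)"
  proof (intro sum.cong refl)
    fix i assume i: "i \<in> {..<n}"
    have "(\<Sum>j<N. (cmod (braket (w j) (F i)))^2) = nsq (F i)" using parsw[of "F i"] Fc i mn by simp
    also have "\<dots> = 1" using Fon[of i i] i mn by (simp add: nsq_def)
    finally show "(\<Sum>j<N. (cmod (braket (w j) (F i)))^2) = 1" .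
  qed
  finally show ?thesis by simp
qed

lemma eig_lower:
  assumes j0: "m \<le> j0" "j0 < m + n" "j0 < N" and sig: "\<sigma> \<ge> 0"
  and HB: "\<And>a b. cmod (\<Sum>k<j0+1-n. \<Sum>j<n. cnj (a k) * braket (E (m+n-1-j0+k)) (F j) * b j)
            \<le> \<sigma> * sqrt (\<Sum>k<j0+1-n. (cmod (a k))^2) * sqrt (\<Sum>j<n. (cmod (b j))^2)"
  shows "1 - \<sigma> \<le> \<mu> j0"
proof (cases "\<sigma> < 1")
  case False
  then show ?thesis using mu_nonneg[OF j0(3)] by simp
next
  case True
  define p where "p = m+n-1-j0"
  define q where "q = j0+1-n"
  have pq: "p + q = m" and d: "q + n = j0 + 1" using j0 mn unfolding p_def q_def by auto
  define g where "g k = (if k < q then E (p+k) else F (k - q))" for k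
  obtain c where c: "c \<in> carrier_vec (j0+1)" "c \<noteq> 0\<^sub>v (j0+1)"
    and cs: "\<forall>l<j0. (\<Sum>k<j0+1. braket (w l) (g k) * c$k) = 0"
    using exists_nonzero_sol[of j0 "j0+1" "\<lambda>l k. braket (w l) (g k)"] by auto
  define \<alpha> where "\<alpha> k = c$k" for k
  define \<beta> where "\<beta> j = c$(q+j)" for j
  define x where "x = lc N {..<q} \<alpha> (\<lambda>k. E (p+k)) + lc N {..<n} \<beta> F"
  have x: "x \<in> carrier_vec N" by (simp add: x_def)
  have Ec': "\<And>k. k \<in> {..<q} \<Longrightarrow> E (p+k) \<in> carrier_vec N" using Ec pq mn by auto
  have Fc': "\<And>k. k \<in> {..<n} \<Longrightarrow> F k \<in> carrier_vec N" using Fc mn by auto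
  have nz: "(\<Sum>k<q. (cmod (\<alpha> k))^2) + (\<Sum>j<n. (cmod (\<beta> j))^2) > 0"
  proof -
    have "(\<Sum>k<q. (cmod (\<alpha> k))^2) + (\<Sum>j<n. (cmod (\<beta> j))^2) = (\<Sum>k<q+n. (cmod (c$k))^2)"
      unfolding \<alpha>_def \<beta>_def by (rule sum_lessThan_add[symmetric])
    also have "\<dots> > 0"
    proof (rule ccontr)
      assume "\<not> (\<Sum>k<q+n. (cmod (c$k))^2) > 0"
      then have "(\<Sum>k<q+n. (cmod (c$k))^2) = 0" using sum_nonneg[of "{..<q+n}" "\<lambda>k. (cmod (c$k))^2"] by simp
      then have "\<forall>k\<in>{..<q+n}. (cmod (c$k))^2 = 0" by (subst sum_nonneg_eq_0_iff[symmetric]) auto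
      then have "c = 0\<^sub>v (j0+1)" using c(1) d by (auto intro!: eq_vecI)
      then show False using c(2) by simp
    qed
    finally show ?thesis .
  qed
  have sigHB: "\<And>a b. cmod (\<Sum>k<q. \<Sum>j<n. cnj (a k) * braket (E (p+k)) (F j) * b j)
            \<le> \<sigma> * sqrt (\<Sum>k<q. (cmod (a k))^2) * sqrt (\<Sum>j<n. (cmod (b j))^2)"
    using HB unfolding p_def q_def .
  have lb: "nsq x > 0" "(1 - \<sigma>) * nsq x \<le> Pe m x + Pf n x"
    using lower_bound[OF pq mn(2) _ sig True sigHB nz] mn unfolding x_def by auto
  have orth: "braket (w l) x = 0" if l: "l < j0" for l
  proof -
    have lN: "l < N" using l j0 by simp
    have "braket (w l) x = braket (w l) (lc N {..<q} \<alpha> (\<lambda>k. E (p+k))) + braket (w l) (lc N {..<n} \<beta> F)"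
      unfolding x_def by (rule braket_add_right[OF wc[OF lN]]) auto
    also have "braket (w l) (lc N {..<q} \<alpha> (\<lambda>k. E (p+k))) = (\<Sum>k<q. \<alpha> k * braket (w l) (E (p+k)))"
      by (rule braket_lc_right[OF wc[OF lN]]) (use Ec' in auto)
    also have "braket (w l) (lc N {..<n} \<beta> F) = (\<Sum>j<n. \<beta> j * braket (w l) (F j))"
      by (rule braket_lc_right[OF wc[OF lN]]) (use Fc' in auto)
    also have "(\<Sum>k<q. \<alpha> k * braket (w l) (E (p+k))) + (\<Sum>j<n. \<beta> j * braket (w l) (F j))
        = (\<Sum>k<q+n. braket (w l) (g k) * c$k)"
      unfolding sum_lessThan_add \<alpha>_def \<beta>_def g_def by (simp add: mult.commute)
    also have "\<dots> = 0" using cs l d by simp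
    finally show ?thesis .
  qed
  have "Pe m x + Pf n x \<le> \<mu> j0 * nsq x" by (rule tail_bound[OF x j0(3) orth])
  then show ?thesis using lb by (metis mult_le_cancel_right_pos order_trans)
qed

end

lemma abel_nonneg:
  fixes lam d :: "nat \<Rightarrow> real"
  assumes "\<And>i j. i \<le> j \<Longrightarrow> j < N \<Longrightarrow> lam j \<le> lam i" "\<And>j. j < N \<Longrightarrow> 0 \<le> lam j"
    "\<And>k. k \<le> N \<Longrightarrow> 0 \<le> (\<Sum>j<k. d j)"
  shows "0 \<le> (\<Sum>j<N. lam j * d j)"
  using assms
proof (induction N arbitrary: lam)
  case 0 then show ?case by simp
next
  case (Suc N lam)
  define lam' where "lam' j = lam j - lam N" for j
  have "0 \<le> (\<Sum>j<N. lam' j * d j)"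
    by (rule Suc.IH) (use Suc.prems in \<open>auto simp: lam'_def\<close>)
  moreover have "0 \<le> lam N * (\<Sum>j<Suc N. d j)" using Suc.prems(2)[of N] Suc.prems(3)[of "Suc N"] by simp
  moreover have "(\<Sum>j<Suc N. lam j * d j) = (\<Sum>j<N. lam' j * d j) + lam N * (\<Sum>j<Suc N. d j)"
    by (simp add: lam'_def algebra_simps sum_subtractf sum_distrib_left)
  ultimately show ?case by simp
qed

lemma kyfan_weight:
  fixes \<mu> y :: "nat \<Rightarrow> real"
  assumes sort: "\<And>i j. i \<le> j \<Longrightarrow> j < N \<Longrightarrow> \<mu> j \<le> \<mu> i"
    and y: "\<And>j. j < N \<Longrightarrow> 0 \<le> y j" "\<And>j. j < N \<Longrightarrow> y j \<le> 1"
    and sy: "(\<Sum>j<N. y j) = real k" and k: "k \<le> N"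
  shows "(\<Sum>j<N. \<mu> j * y j) \<le> (\<Sum>j<k. \<mu> j)"
proof (cases "k = 0")
  case True
  then have "\<forall>j\<in>{..<N}. y j = 0" using sy y(1) by (subst sum_nonneg_eq_0_iff[symmetric]) auto
  then show ?thesis using True by simp
next
  case False
  define c where "c = \<mu> (k-1)"
  obtain r where r: "N = k + r" using k le_Suc_ex by blast
  have 1: "(\<Sum>j<k. \<mu> j * (y j - 1)) \<le> (\<Sum>j<k. c * (y j - 1))"
  proof (intro sum_mono)
    fix j assume j: "j \<in> {..<k}"
    then have "c \<le> \<mu> j" unfolding c_def using sort[of j "k-1"] k by auto
    moreover have "y j - 1 \<le> 0" using y(2)[of j] j k by auto
    ultimately show "\<mu> j * (y j - 1) \<le> c * (y j - 1)" by (simp add: mult_right_mono_neg)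
  qed
  have 2: "(\<Sum>j<r. \<mu> (k+j) * y (k+j)) \<le> (\<Sum>j<r. c * y (k+j))"
  proof (intro sum_mono)
    fix j assume j: "j \<in> {..<r}"
    then have "\<mu> (k+j) \<le> c" unfolding c_def using sort[of "k-1" "k+j"] r False by auto
    moreover have "0 \<le> y (k+j)" using y(1)[of "k+j"] j r by auto
    ultimately show "\<mu> (k+j) * y (k+j) \<le> c * y (k+j)" by (simp add: mult_right_mono)
  qed
  have "(\<Sum>j<N. \<mu> j * y j) - (\<Sum>j<k. \<mu> j) = (\<Sum>j<k. \<mu> j * (y j - 1)) + (\<Sum>j<r. \<mu> (k+j) * y (k+j))"
    unfolding r sum_lessThan_add by (simp add: algebra_simps sum_subtractf)
  also have "\<dots> \<le> (\<Sum>j<k. c * (y j - 1)) + (\<Sum>j<r. c * y (k+j))" using 1 2 by simp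
  also have "\<dots> = c * ((\<Sum>j<N. y j) - real k)"
    unfolding r sum_lessThan_add by (simp add: algebra_simps sum_subtractf sum_distrib_left)
  also have "\<dots> = 0" using sy by simp
  finally show ?thesis by simp
qed

lemma pick_interval: assumes "k < q" shows "pick {p..<p+q} k = p + k"
proof -
  have "{a\<in>{p..<p+q}. a < p+k} = {p..<p+k}" using assms by auto
  then have "card {a\<in>{p..<p+q}. a < p+k} = k" by simp
  moreover have "p + k \<in> {p..<p+q}" using assms by simp
  ultimately show ?thesis using pick_card_in_set[of "p+k" "{p..<p+q}"] by simp
qed

lemma submatrix_interval:
  assumes U: "U \<in> carrier_mat N N" and pq: "p + q \<le> N" and n: "r \<le> N"
  shows "submatrix U {p..<p+q} {0..<r} \<in> carrier_mat q r"
    "\<And>k j. k < q \<Longrightarrow> j < r \<Longrightarrow> submatrix U {p..<p+q} {0..<r} $$ (k,j) = U $$ (p+k, j)"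
proof -
  have c1: "card {i. i < dim_row U \<and> i \<in> {p..<p+q}} = q"
  proof -
    have "{i. i < dim_row U \<and> i \<in> {p..<p+q}} = {p..<p+q}" using U pq by auto
    then show ?thesis by simp
  qed
  have c2: "card {i. i < dim_col U \<and> i \<in> {0..<r}} = r"
  proof -
    have "{i. i < dim_col U \<and> i \<in> {0..<r}} = {0..<r}" using U n by auto
    then show ?thesis by simp
  qed
  show "submatrix U {p..<p+q} {0..<r} \<in> carrier_mat q r"
    unfolding carrier_mat_def using c1 c2 by (simp add: dim_submatrix)
  fix k j assume kj: "k < q" "j < r"
  have "submatrix U {p..<p+q} {0..<r} $$ (k,j) = U $$ (pick {p..<p+q} k, pick {0..<r} j)"
    by (rule submatrix_index) (use c1 c2 kj in auto)
  also have "pick {p..<p+q} k = p + k" using pick_interval[OF kj(1)] .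
  also have "pick {0..<r} j = j" using pick_interval[OF kj(2), of 0] by simp
  finally show "submatrix U {p..<p+q} {0..<r} $$ (k,j) = U $$ (p+k, j)" .
qed

lemma s_val_ge:
  assumes "I \<subseteq> {0..<N}" "J \<subseteq> {0..<N}" "card I + card J = k + 1"
  shows "op_norm (submatrix U I J) \<le> s_val N U k"
proof -
  let ?S = "{op_norm (submatrix U I J) | I J. I \<subseteq> {0..<N} \<and> J \<subseteq> {0..<N} \<and> card I + card J = k + 1}"
  have "?S \<subseteq> (\<lambda>(I,J). op_norm (submatrix U I J)) ` (Pow {0..<N} \<times> Pow {0..<N})" by auto
  then have "finite ?S" by (rule finite_subset) auto
  moreover have "op_norm (submatrix U I J) \<in> ?S" using assms by blast
  ultimately show ?thesis unfolding s_val_def by (rule Max_ge)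
qed

context two_bases begin

definition Um :: "complex mat" where "Um = mat N N (\<lambda>(i,j). braket (E i) (F j))"

lemma Um_c: "Um \<in> carrier_mat N N" by (simp add: Um_def)

lemma HB_sub:
  assumes pq: "p + q \<le> N" and n: "r \<le> N"
  shows "cmod (\<Sum>k<q. \<Sum>j<r. cnj (a k) * braket (E (p+k)) (F j) * b j)
     \<le> op_norm (submatrix Um {p..<p+q} {0..<r}) * sqrt (\<Sum>k<q. (cmod (a k))^2) * sqrt (\<Sum>j<r. (cmod (b j))^2)"
proof -
  note sm = submatrix_interval[OF Um_c pq n]
  have "(\<Sum>k<q. \<Sum>j<r. cnj (a k) * braket (E (p+k)) (F j) * b j)
      = (\<Sum>k<q. \<Sum>j<r. cnj (a k) * submatrix Um {p..<p+q} {0..<r} $$ (k,j) * b j)"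
  proof (intro sum.cong refl)
    fix k j assume kj: "k \<in> {..<q}" "j \<in> {..<r}"
    have "submatrix Um {p..<p+q} {0..<r} $$ (k,j) = Um $$ (p+k, j)" using sm(2) kj by simp
    also have "\<dots> = braket (E (p+k)) (F j)" using kj pq n by (simp add: Um_def)
    finally show "cnj (a k) * braket (E (p+k)) (F j) * b j = cnj (a k) * submatrix Um {p..<p+q} {0..<r} $$ (k,j) * b j"
      by simp
  qed
  then show ?thesis using op_norm_bil[OF sm(1)] by simp
qed

lemma s_ge_1: assumes "N \<le> k" "k < 2 * N" shows "1 \<le> s_val N Um k"
proof -
  define r where "r = k + 1 - N"
  have r: "0 < r" "r \<le> N" using assms by (auto simp: r_def)
  define M where "M = submatrix Um {0..<0+N} {0..<r}"
  note sm = submatrix_interval[OF Um_c _ r(2), of 0 N]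
  have M: "M \<in> carrier_mat N r" unfolding M_def using sm by simp
  have u: "unit_vec r 0 \<in> carrier_vec r" by simp
  have Mu: "(M *\<^sub>v unit_vec r 0) $ i = braket (E i) (F 0)" if i: "i < N" for i
  proof -
    have "(M *\<^sub>v unit_vec r 0) $ i = (\<Sum>j<r. M $$ (i,j) * unit_vec r 0 $ j)" using mult_mat_vec_sum[OF M u i] .
    also have "\<dots> = (\<Sum>j<r. if j = 0 then M $$ (i,j) else 0)"
      by (intro sum.cong refl) (auto simp: unit_vec_def)
    also have "\<dots> = M $$ (i,0)" using r by simp
    also have "\<dots> = braket (E i) (F 0)" unfolding M_def using sm(2)[of i 0] i r by (simp add: Um_def)
    finally show ?thesis .
  qed
  have "vnorm (M *\<^sub>v unit_vec r 0) = sqrt (\<Sum>i<N. (cmod ((M *\<^sub>v unit_vec r 0) $ i))^2)"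
    by (rule vnorm_sum) (use M in auto)
  also have "\<dots> = sqrt (\<Sum>i<N. (cmod (braket (E i) (F 0)))^2)"
  proof (intro arg_cong[where f=sqrt] sum.cong refl)
    fix i assume "i \<in> {..<N}"
    then have "i < N" by simp
    show "(cmod ((M *\<^sub>v unit_vec r 0) $ i))^2 = (cmod (braket (E i) (F 0)))^2" unfolding Mu[OF \<open>i < N\<close>] ..
  qed
  also have "(\<Sum>i<N. (cmod (braket (E i) (F 0)))^2) = nsq (F 0)"
    unfolding nsq_def by (rule onb_parseval[OF E]) (use Fc r in auto)
  also have "nsq (F 0) = 1" using Fon[of 0 0] r by (simp add: nsq_def)
  finally have 1: "vnorm (M *\<^sub>v unit_vec r 0) = 1" by simp
  have "(\<Sum>i<r. (cmod (unit_vec r 0 $ i :: complex))^2) = (\<Sum>i<r. if i = 0 then 1 else 0)"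
    by (intro sum.cong refl) (auto simp: unit_vec_def)
  also have "\<dots> = 1" using r by simp
  finally have 2: "vnorm (unit_vec r 0 :: complex vec) = 1" unfolding vnorm_sum[OF u] by simp
  have "1 \<le> op_norm M" using op_norm_bound[OF M u] 1 2 by simp
  also have "op_norm M \<le> s_val N Um k" unfolding M_def
    by (rule s_val_ge) (use assms r in \<open>auto simp: r_def\<close>)
  finally show ?thesis .
qed

end

context Asetup begin

definition sv :: "nat \<Rightarrow> real" where "sv k = s_val N Um k"

definition bb :: "nat \<Rightarrow> real" where
  "bb j = (if j < n then 1 + sv (n+m-(j+1)) else if j < m then 1 else if j < m+n then 1 - sv j else 0)"

lemma mu_le_bb: assumes n1: "1 \<le> n" and j: "j < m" "j < N" shows "\<mu> j \<le> bb j"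
proof (cases "j < n")
  case True
  define \<sigma> where "\<sigma> = op_norm (submatrix Um {j..<j+(m-j)} {0..<n})"
  have sm: "submatrix Um {j..<j+(m-j)} {0..<n} \<in> carrier_mat (m-j) n"
    using submatrix_interval(1)[OF Um_c, of j "m-j" n] j mn by simp
  have sig: "\<sigma> \<ge> 0" unfolding \<sigma>_def by (rule op_norm_nonneg[OF sm]) (use n1 in simp)
  have "\<mu> j \<le> 1 + \<sigma>"
    by (rule eig_upper1[OF True sig]) (unfold \<sigma>_def, rule HB_sub, use j mn in auto)
  also have "\<sigma> \<le> sv (n+m-(j+1))" unfolding \<sigma>_def sv_def
    by (rule s_val_ge) (use j mn True in auto)
  finally show ?thesis using True by (simp add: bb_def)
next
  case False
  then show ?thesis using eig_upper2[of j] j by (simp add: bb_def)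
qed

lemma bb_le_mu: assumes n1: "1 \<le> n" and j: "m \<le> j" "j < N" shows "bb j \<le> \<mu> j"
proof (cases "j < m + n")
  case True
  define p where "p = m+n-1-j"
  define q where "q = j+1-n"
  define \<sigma> where "\<sigma> = op_norm (submatrix Um {p..<p+q} {0..<n})"
  have pq: "p + q = m" using j True mn unfolding p_def q_def by auto
  have sm: "submatrix Um {p..<p+q} {0..<n} \<in> carrier_mat q n"
    using submatrix_interval(1)[OF Um_c, of p q n] pq mn by simp
  have sig: "\<sigma> \<ge> 0" unfolding \<sigma>_def by (rule op_norm_nonneg[OF sm]) (use n1 in simp)
  have "1 - \<sigma> \<le> \<mu> j"
    by (rule eig_lower[OF j(1) True j(2) sig]) (unfold \<sigma>_def p_def q_def, rule HB_sub, use j mn pq p_def q_def in auto)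
  moreover have "\<sigma> \<le> sv j" unfolding \<sigma>_def sv_def
    by (rule s_val_ge) (use j mn True pq in \<open>auto simp: p_def q_def\<close>)
  ultimately show ?thesis using True j mn by (simp add: bb_def)
next
  case False
  then show ?thesis using mu_nonneg[of j] j mn by (simp add: bb_def)
qed

lemma sum_bb_mn: "(\<Sum>j<m+n. bb j) = real m + real n"
proof -
  have mn': "m + n = n + ((m - n) + n)" using mn by simp
  have 1: "(\<Sum>j<n. bb j) = (\<Sum>j<n. 1 + sv (n+m-(j+1)))" by (intro sum.cong refl) (simp add: bb_def)
  have 2: "(\<Sum>j<m-n. bb (n+j)) = (\<Sum>j<m-n. 1)" by (intro sum.cong refl) (simp add: bb_def)
  have 3: "(\<Sum>j<n. bb (n + (m-n) + j)) = (\<Sum>j<n. 1 - sv (m+j))"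
    using mn by (intro sum.cong refl) (simp add: bb_def)
  have r: "(\<Sum>j<n. sv (n+m-(j+1))) = (\<Sum>j<n. sv (m+j))"
  proof -
    have "(\<Sum>j<n. sv (n+m-(j+1))) = (\<Sum>j<n. (\<lambda>i. sv (m+i)) (n - Suc j))"
      by (intro sum.cong refl) (simp add: add.commute)
    also have "\<dots> = (\<Sum>j<n. sv (m+j))" by (rule sum.nat_diff_reindex)
    finally show ?thesis .
  qed
  have "(\<Sum>j<m+n. bb j) = (\<Sum>j<n. bb j) + ((\<Sum>j<m-n. bb (n+j)) + (\<Sum>j<n. bb (n + (m-n) + j)))"
    unfolding mn' sum_lessThan_add by (simp add: add.assoc)
  also have "\<dots> = real m + real n" unfolding 1 2 3
    using r mn by (simp add: sum.distrib sum_subtractf)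
  finally show ?thesis .
qed

lemma sum_bb_N: assumes n1: "1 \<le> n" shows "real m + real n \<le> (\<Sum>j<N. bb j)"
proof (cases "m + n \<le> N")
  case True
  obtain r where r: "N = (m+n) + r" using True le_Suc_ex by blast
  have "(\<Sum>j<N. bb j) = (\<Sum>j<m+n. bb j) + (\<Sum>j<r. bb (m+n+j))" unfolding r sum_lessThan_add ..
  also have "(\<Sum>j<r. bb (m+n+j)) = 0" by (intro sum.neutral) (simp add: bb_def)
  finally show ?thesis using sum_bb_mn by simp
next
  case False
  obtain r where r: "m + n = N + r" using False le_Suc_ex[of N "m+n"] by auto
  have "(\<Sum>j<m+n. bb j) = (\<Sum>j<N. bb j) + (\<Sum>j<r. bb (N+j))" unfolding r sum_lessThan_add ..
  moreover have "(\<Sum>j<r. bb (N+j)) \<le> 0"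
  proof (intro sum_nonpos)
    fix j assume j: "j \<in> {..<r}"
    have "1 \<le> s_val N Um (N+j)" by (rule s_ge_1) (use j r mn in auto)
    then show "bb (N+j) \<le> 0" using j r mn n1 by (simp add: bb_def sv_def)
  qed
  ultimately show ?thesis using sum_bb_mn by simp
qed

lemma partial_mu_bb: assumes n1: "1 \<le> n" and k: "k \<le> N" shows "(\<Sum>j<k. \<mu> j) \<le> (\<Sum>j<k. bb j)"
proof (cases "k \<le> m")
  case True
  then show ?thesis using mu_le_bb[OF n1] k by (intro sum_mono) auto
next
  case False
  obtain r where r: "N = k + r" using k le_Suc_ex by blast
  have t: "(\<Sum>j<k. \<mu> j) + (\<Sum>j<r. \<mu> (k+j)) = real m + real n"
    using trace_mu unfolding r sum_lessThan_add by simp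
  have tb: "(\<Sum>j<k. bb j) + (\<Sum>j<r. bb (k+j)) \<ge> real m + real n"
    using sum_bb_N[OF n1] unfolding r sum_lessThan_add by simp
  have "(\<Sum>j<r. bb (k+j)) \<le> (\<Sum>j<r. \<mu> (k+j))"
    using bb_le_mu[OF n1] False r by (intro sum_mono) auto
  then show ?thesis using t tb by simp
qed

end

lemma prod_upt_conv: "(\<Prod>j=1..N. f j) = prod_list (map (\<lambda>j. f (j+1)) [0..<N])"
  for f :: "nat \<Rightarrow> 'a::comm_monoid_mult"
  by (induction N) (auto simp: atLeastAtMostSuc_conv mult.commute)

lemma sum_shift_block: "(\<Sum>j\<in>{Suc a..a+b}. f j) = (\<Sum>j<b. f (Suc (a+j)))"
  for f :: "nat \<Rightarrow> 'a::comm_monoid_add"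
proof (induction b)
  case 0 then show ?case by simp
next
  case (Suc b)
  have "{Suc a..a + Suc b} = insert (Suc (a+b)) {Suc a..a+b}" by auto
  then show ?case using Suc by (simp add: add.commute)
qed

theorem proposition1:
  fixes N m n :: nat and \<rho> :: "complex mat" and lam :: "nat \<Rightarrow> real"
    and e a :: "nat \<Rightarrow> complex vec" and U :: "complex mat"
    and p q :: "nat \<Rightarrow> real"
  assumes rho: "density_mat N \<rho>"
    and eig: "char_poly \<rho> = (\<Prod>j=1..N. [:- complex_of_real (lam j), 1:])"
    and sorted: "\<And>i j. 1 \<le> i \<Longrightarrow> i \<le> j \<Longrightarrow> j \<le> N \<Longrightarrow> lam j \<le> lam i"
    and lam_zero: "\<And>j. j > N \<Longrightarrow> lam j = 0"
    and e: "orthonormal_basis N (\<lambda>i. e (i + 1))"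
    and a: "orthonormal_basis N (\<lambda>i. a (i + 1))"
    and U_def: "U = mat N N (\<lambda>(i, j). braket (e (i + 1)) (a (j + 1)))"
    and p_def: "\<And>i. p i = Re (braket (e i) (\<rho> *\<^sub>v e i))"
    and q_def: "\<And>i. q i = Re (braket (a i) (\<rho> *\<^sub>v a i))"
    and mn: "1 \<le> n" "n \<le> m" "m \<le> N"
  shows "(\<Sum>i=1..m. p i) + (\<Sum>i=1..n. q i)
     \<le> (\<Sum>j=1..n. lam j * (1 + s_val N U (n + m - j)))
       + (\<Sum>j=n+1..m. lam j)
       + (\<Sum>j=m+1..m+n. lam j * (1 - s_val N U (j - 1)))"
proof -
  define E where "E i = e (i+1)" for i
  define F where "F j = a (j+1)" for j
  have Eo: "onb N E" using e unfolding onb_def orthonormal_basis_def E_def by simp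
  have Fo: "onb N F" using a unfolding onb_def orthonormal_basis_def F_def by simp
  interpret tb: two_bases N E F by unfold_locales (rule Eo, rule Fo)
  have UU: "U = tb.Um" unfolding U_def tb.Um_def E_def F_def by simp
  have rc: "\<rho> \<in> carrier_mat N N" and rh: "hermitian_mat \<rho>"
    and psd: "\<And>v. v \<in> carrier_vec N \<Longrightarrow> Re (braket v (\<rho> *\<^sub>v v)) \<ge> 0"
    using rho unfolding density_mat_def by auto
  have hr: "\<forall>i<N. \<forall>j<N. \<rho>$$(i,j) = cnj (\<rho>$$(j,i))" by (rule hermitian_entries[OF rh rc])
  define es where "es = map (\<lambda>j. complex_of_real (lam (j+1))) [0..<N]"
  have cp: "char_poly \<rho> = (\<Prod>c\<leftarrow>es. [:-c,1:])"
    unfolding eig es_def prod_upt_conv by (simp add: comp_def)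
  obtain v where v: "onb N v" and vev: "\<forall>i<N. \<rho> *\<^sub>v v i = es!i \<cdot>\<^sub>v v i"
    using spectral[OF rc hr cp] by blast
  have vc: "\<And>l. l < N \<Longrightarrow> v l \<in> carrier_vec N" using v by (auto simp: onb_def)
  have vev': "\<And>l. l < N \<Longrightarrow> \<rho> *\<^sub>v v l = complex_of_real (lam (l+1)) \<cdot>\<^sub>v v l"
    using vev by (simp add: es_def)
  have lam_nn: "0 \<le> lam (l+1)" if l: "l < N" for l
  proof -
    have "braket (v l) (\<rho> *\<^sub>v v l) = complex_of_real (lam (l+1)) * braket (v l) (v l)"
      unfolding vev'[OF l] by (rule braket_smult_right[OF vc[OF l] vc[OF l]])
    also have "braket (v l) (v l) = 1" using v l by (simp add: onb_def)
    finally show ?thesis using psd[OF vc[OF l]] by simp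
  qed
  have quadr: "Re (braket x (\<rho> *\<^sub>v x)) = (\<Sum>l<N. lam (l+1) * (cmod (braket (v l) x))^2)"
    if x: "x \<in> carrier_vec N" for x
  proof -
    have "braket x (\<rho> *\<^sub>v x) = (\<Sum>l<N. complex_of_real (lam (l+1)) * of_real ((cmod (braket (v l) x))^2))"
      by (rule onb_quad[OF v rc _ x]) (use vev' in auto)
    also have "\<dots> = complex_of_real (\<Sum>l<N. lam (l+1) * (cmod (braket (v l) x))^2)" by simp
    finally show ?thesis by simp
  qed
  have ex: "\<exists>w \<mu>. onb N w \<and> (\<forall>i<N. tb.Amat m n *\<^sub>v w i = complex_of_real (\<mu> i) \<cdot>\<^sub>v w i) \<and>
     (\<forall>i j. i \<le> j \<longrightarrow> j < N \<longrightarrow> \<mu> j \<le> \<mu> i)"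
    by (rule spectral_sorted[OF tb.Amat_c tb.Amat_herm])
  then obtain w \<mu> where wall: "onb N w \<and> (\<forall>i<N. tb.Amat m n *\<^sub>v w i = complex_of_real (\<mu> i) \<cdot>\<^sub>v w i) \<and>
     (\<forall>i j. i \<le> j \<longrightarrow> j < N \<longrightarrow> \<mu> j \<le> \<mu> i)" by (elim exE) (rule that)
  have w: "onb N w" and wev: "\<forall>i<N. tb.Amat m n *\<^sub>v w i = complex_of_real (\<mu> i) \<cdot>\<^sub>v w i"
    and \<mu>s: "\<forall>i j. i \<le> j \<longrightarrow> j < N \<longrightarrow> \<mu> j \<le> \<mu> i" using wall by simp_all
  interpret As: Asetup N E F m n w \<mu> by unfold_locales (use mn w wev \<mu>s in simp_all)
  define cC where "cC l = tb.Pe m (v l) + tb.Pf n (v l)" for l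
  define g where "g j = lam (j+1) * As.bb j" for j
  have Ec: "\<And>i. i < N \<Longrightarrow> E i \<in> carrier_vec N" and Fc: "\<And>i. i < N \<Longrightarrow> F i \<in> carrier_vec N"
    using Eo Fo by (auto simp: onb_def)
  have pE: "(\<Sum>i=1..m. p i) = (\<Sum>l<N. lam (l+1) * tb.Pe m (v l))"
  proof -
    have "(\<Sum>i=1..m. p i) = (\<Sum>i<m. p (Suc i))" using sum.atLeast1_atMost_eq[of p m] by simp
    also have "\<dots> = (\<Sum>i<m. \<Sum>l<N. lam (l+1) * (cmod (braket (v l) (E i)))^2)"
    proof (intro sum.cong refl)
      fix i assume i: "i \<in> {..<m}"
      have "p (Suc i) = Re (braket (E i) (\<rho> *\<^sub>v E i))" by (simp add: p_def E_def)
      also have "\<dots> = (\<Sum>l<N. lam (l+1) * (cmod (braket (v l) (E i)))^2)" using quadr Ec i mn by simp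
      finally show "p (Suc i) = (\<Sum>l<N. lam (l+1) * (cmod (braket (v l) (E i)))^2)" .
    qed
    also have "\<dots> = (\<Sum>l<N. \<Sum>i<m. lam (l+1) * (cmod (braket (v l) (E i)))^2)" by (rule sum.swap)
    also have "\<dots> = (\<Sum>l<N. lam (l+1) * tb.Pe m (v l))"
    proof (intro sum.cong refl)
      fix l assume l: "l \<in> {..<N}"
      have "(\<Sum>i<m. lam (l+1) * (cmod (braket (v l) (E i)))^2) = lam (l+1) * (\<Sum>i<m. (cmod (braket (E i) (v l)))^2)"
        unfolding sum_distrib_left using As.cmod_braket_sym vc Ec l mn by (intro sum.cong refl) auto
      then show "(\<Sum>i<m. lam (l+1) * (cmod (braket (v l) (E i)))^2) = lam (l+1) * tb.Pe m (v l)"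
        by (simp add: tb.Pe_def)
    qed
    finally show ?thesis .
  qed
  have qF: "(\<Sum>i=1..n. q i) = (\<Sum>l<N. lam (l+1) * tb.Pf n (v l))"
  proof -
    have "(\<Sum>i=1..n. q i) = (\<Sum>i<n. q (Suc i))" using sum.atLeast1_atMost_eq[of q n] by simp
    also have "\<dots> = (\<Sum>i<n. \<Sum>l<N. lam (l+1) * (cmod (braket (v l) (F i)))^2)"
    proof (intro sum.cong refl)
      fix i assume i: "i \<in> {..<n}"
      have "q (Suc i) = Re (braket (F i) (\<rho> *\<^sub>v F i))" by (simp add: q_def F_def)
      also have "\<dots> = (\<Sum>l<N. lam (l+1) * (cmod (braket (v l) (F i)))^2)" using quadr Fc i mn by simp
      finally show "q (Suc i) = (\<Sum>l<N. lam (l+1) * (cmod (braket (v l) (F i)))^2)" .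
    qed
    also have "\<dots> = (\<Sum>l<N. \<Sum>i<n. lam (l+1) * (cmod (braket (v l) (F i)))^2)" by (rule sum.swap)
    also have "\<dots> = (\<Sum>l<N. lam (l+1) * tb.Pf n (v l))"
    proof (intro sum.cong refl)
      fix l assume l: "l \<in> {..<N}"
      have "(\<Sum>i<n. lam (l+1) * (cmod (braket (v l) (F i)))^2) = lam (l+1) * (\<Sum>i<n. (cmod (braket (F i) (v l)))^2)"
        unfolding sum_distrib_left using As.cmod_braket_sym vc Fc l mn by (intro sum.cong refl) auto
      then show "(\<Sum>i<n. lam (l+1) * (cmod (braket (v l) (F i)))^2) = lam (l+1) * tb.Pf n (v l)"
        by (simp add: tb.Pf_def)
    qed
    finally show ?thesis .
  qed
  have LHS: "(\<Sum>i=1..m. p i) + (\<Sum>i=1..n. q i) = (\<Sum>l<N. lam (l+1) * cC l)"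
    unfolding pE qF cC_def by (simp add: sum.distrib algebra_simps)
  have RHS: "(\<Sum>j=1..n. lam j * (1 + s_val N U (n + m - j)))
       + (\<Sum>j=n+1..m. lam j)
       + (\<Sum>j=m+1..m+n. lam j * (1 - s_val N U (j - 1))) = (\<Sum>l<N. lam (l+1) * As.bb l)"
  proof -
    have sU: "s_val N U k = As.sv k" for k unfolding UU As.sv_def ..
    have T1: "(\<Sum>j=1..n. lam j * (1 + s_val N U (n + m - j))) = (\<Sum>j<n. g j)"
    proof -
      have "(\<Sum>j=1..n. lam j * (1 + s_val N U (n + m - j))) = (\<Sum>j<n. lam (Suc j) * (1 + s_val N U (n + m - Suc j)))"
        using sum.atLeast1_atMost_eq[of "\<lambda>j. lam j * (1 + s_val N U (n + m - j))" n] by simp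
      also have "\<dots> = (\<Sum>j<n. g j)" by (intro sum.cong refl) (simp add: g_def As.bb_def sU)
      finally show ?thesis .
    qed
    have T2: "(\<Sum>j=n+1..m. lam j) = (\<Sum>j<m-n. g (n+j))"
    proof -
      have "(\<Sum>j=n+1..m. lam j) = (\<Sum>j\<in>{Suc n..n+(m-n)}. lam j)" using mn by simp
      also have "\<dots> = (\<Sum>j<m-n. lam (Suc (n+j)))" by (rule sum_shift_block)
      also have "\<dots> = (\<Sum>j<m-n. g (n+j))" by (intro sum.cong refl) (simp add: g_def As.bb_def)
      finally show ?thesis .
    qed
    have T3: "(\<Sum>j=m+1..m+n. lam j * (1 - s_val N U (j - 1))) = (\<Sum>j<n. g (n + (m-n) + j))"
    proof -
      have "(\<Sum>j=m+1..m+n. lam j * (1 - s_val N U (j - 1))) = (\<Sum>j\<in>{Suc m..m+n}. lam j * (1 - s_val N U (j - 1)))" by simp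
      also have "\<dots> = (\<Sum>j<n. lam (Suc (m+j)) * (1 - s_val N U (Suc (m+j) - 1)))" by (rule sum_shift_block)
      also have "\<dots> = (\<Sum>j<n. g (n + (m-n) + j))" using mn by (intro sum.cong refl) (simp add: g_def As.bb_def sU)
      finally show ?thesis .
    qed
    have "(\<Sum>j<n. g j) + (\<Sum>j<m-n. g (n+j)) + (\<Sum>j<n. g (n + (m-n) + j)) = (\<Sum>j<n + ((m-n) + n). g j)"
      unfolding sum_lessThan_add by (simp add: add.assoc)
    also have "n + ((m-n) + n) = m + n" using mn by simp
    also have "(\<Sum>j<m+n. g j) = (\<Sum>j<N. g j)"
    proof (cases "m + n \<le> N")
      case True
      obtain r where r: "N = (m+n) + r" using True le_Suc_ex by blast
      have "(\<Sum>j<N. g j) = (\<Sum>j<m+n. g j) + (\<Sum>j<r. g (m+n+j))" unfolding r sum_lessThan_add ..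
      also have "(\<Sum>j<r. g (m+n+j)) = 0" by (intro sum.neutral) (simp add: g_def As.bb_def)
      finally show ?thesis by simp
    next
      case False
      obtain r where r: "m + n = N + r" using False le_Suc_ex[of N "m+n"] by auto
      have "(\<Sum>j<m+n. g j) = (\<Sum>j<N. g j) + (\<Sum>j<r. g (N+j))" unfolding r sum_lessThan_add ..
      also have "(\<Sum>j<r. g (N+j)) = 0" by (intro sum.neutral) (simp add: g_def lam_zero)
      finally show ?thesis by simp
    qed
    finally show ?thesis unfolding T1 T2 T3 g_def .
  qed
  have partial: "(\<Sum>l<k. cC l) \<le> (\<Sum>l<k. As.bb l)" if k: "k \<le> N" for k
  proof -
    define y where "y j = (\<Sum>l<k. (cmod (braket (w j) (v l)))^2)" for j
    have "(\<Sum>l<k. cC l) = (\<Sum>l<k. \<Sum>j<N. \<mu> j * (cmod (braket (w j) (v l)))^2)"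
      using As.quadA vc k by (intro sum.cong refl) (auto simp: cC_def)
    also have "\<dots> = (\<Sum>j<N. \<Sum>l<k. \<mu> j * (cmod (braket (w j) (v l)))^2)" by (rule sum.swap)
    also have "\<dots> = (\<Sum>j<N. \<mu> j * y j)" unfolding y_def by (simp add: sum_distrib_left)
    also have "\<dots> \<le> (\<Sum>j<k. \<mu> j)"
    proof (rule kyfan_weight[OF _ _ _ _ k])
      show "\<And>i j. i \<le> j \<Longrightarrow> j < N \<Longrightarrow> \<mu> j \<le> \<mu> i" using \<mu>s by simp
      show "\<And>j. j < N \<Longrightarrow> 0 \<le> y j" unfolding y_def by (simp add: sum_nonneg)
      show "y j \<le> 1" if j: "j < N" for j
      proof -
        have "y j \<le> (\<Sum>l<N. (cmod (braket (w j) (v l)))^2)" unfolding y_def using k by (intro sum_mono2) auto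
        also have "\<dots> = (\<Sum>l<N. (cmod (braket (v l) (w j)))^2)"
          using As.cmod_braket_sym vc As.wc j by (intro sum.cong refl) auto
        also have "\<dots> = nsq (w j)" unfolding nsq_def by (rule onb_parseval[OF v As.wc[OF j]])
        also have "\<dots> = 1" using w j by (simp add: onb_def nsq_def)
        finally show "y j \<le> 1" .
      qed
      show "(\<Sum>j<N. y j) = real k"
      proof -
        have "(\<Sum>j<N. y j) = (\<Sum>l<k. \<Sum>j<N. (cmod (braket (w j) (v l)))^2)" unfolding y_def by (rule sum.swap)
        also have "\<dots> = (\<Sum>l<k. 1)"
        proof (intro sum.cong refl)
          fix l assume l: "l \<in> {..<k}"
          have "(\<Sum>j<N. (cmod (braket (w j) (v l)))^2) = nsq (v l)" using As.parsw[of "v l"] vc l k by simp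
          also have "\<dots> = 1" using v l k by (simp add: onb_def nsq_def)
          finally show "(\<Sum>j<N. (cmod (braket (w j) (v l)))^2) = 1" .
        qed
        finally show ?thesis by simp
      qed
    qed
    also have "\<dots> \<le> (\<Sum>l<k. As.bb l)" by (rule As.partial_mu_bb[OF mn(1) k])
    finally show ?thesis .
  qed
  have "0 \<le> (\<Sum>l<N. lam (l+1) * (As.bb l - cC l))"
  proof (rule abel_nonneg)
    fix i j assume "i \<le> j" "j < N" then show "lam (j+1) \<le> lam (i+1)" using sorted by simp
  next
    fix j assume "j < N" then show "0 \<le> lam (j+1)" using lam_nn by simp
  next
    fix k assume "k \<le> N" then show "0 \<le> (\<Sum>j<k. As.bb j - cC j)" using partial by (simp add: sum_subtractf)
  qed
  then have "(\<Sum>l<N. lam (l+1) * cC l) \<le> (\<Sum>l<N. lam (l+1) * As.bb l)"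
    by (simp add: algebra_simps sum_subtractf)
  then show ?thesis using LHS RHS by simp
qed

end
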